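(* Let $s\in(0,1)$, $p=1$, $T\in\mathbb{N}$, and let $\mathbf{X}\in\mathbb{X}_T$ have multiplicity $m_i>1$ at $x_i$ for some $i\in\{1,\dots,T\}$, where $m_i=\#\{j\in\{1,\dots,T\}:x_j=x_i\}$. Then there exists $\mathbf{X}'\in\mathbb{X}_T$ with multiplicity $m_i-1$ at $x_i$ such that $\mathcal{F}^s_1[\mathbf{X}]>\mathcal{F}^s_1[\mathbf{X}']$.
   Context: One-dimensional setting. Let $T\in\mathbb{N}$. A configuration is a set $\mathbf{X}=\bigcup_{k\in\mathbb{Z}}(\bar{\mathbf{X}}+kT)$ with $\bar{\mathbf{X}}=(x_1,\dots,x_T)\in[0,T)^T$, $x_i\le x_j$ for $i<j$ (points counted with multiplicity); $\mathbb{X}_T$ is the set of configurations, and the multiplicity of $\mathbf{X}$ at a point $x$ is the number of indices $j\in\{1,\dots,T\}$ with $x_j=x$. For $\mathbf{X}\in\mathbb{X}_T$, $u[\mathbf{X}]$ is the $T$-periodic function (defined up to an additive constant) with distributional derivative $\mathrm{D}u[\mathbf{X}]=\mathcal{L}^1-\sum_{x\in\mathbf{X}}\delta_x$ (multiplicities counted). $\mathcal{F}^s_1[\mathbf{X}]=\int_0^T\int_{\mathbb{R}}\frac{|u[\mathbf{X}](x)-u[\mathbf{X}](y)|}{|x-y|^{1+s}}\,\mathrm{d}y\,\mathrm{d}x$. *)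

theory Defs
  imports "HOL-Analysis.Analysis"
begin

text \<open>A configuration in \<open>\<bbbX>_T\<close> is represented by its sorted fundamental
  tuple \<open>(x_1,\<dots>,x_T)\<close> in \<open>[0,T)\<close>, given as a list (index \<open>i\<close> of the paper
  is list position \<open>i - 1\<close>). The full configuration is the union of all
  translates by \<open>kT\<close>, \<open>k \<in> \<int>\<close>.\<close>
definition config :: "nat \<Rightarrow> real list \<Rightarrow> bool" where
  "config T xs \<longleftrightarrow> length xs = T \<and> sorted xs \<and> (\<forall>x\<in>set xs. 0 \<le> x \<and> x < real T)"

definition mult :: "real list \<Rightarrow> real \<Rightarrow> nat" where
  "mult xs a = length (filter (\<lambda>y. y = a) xs)"

text \<open>A representative of \<open>u[X]\<close>: \<open>u(x) = x - \<Sum>_j \<lfloor>(x - x_j)/T\<rfloor>\<close>.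
  It is \<open>T\<close>-periodic and its distributional derivative is
  \<open>\<L>^1 - \<Sum>_{x \<in> X} \<delta>_x\<close> (multiplicities counted); \<open>u[X]\<close> is only defined up to
  an additive constant, which does not affect the energy.\<close>
definition u_conf :: "nat \<Rightarrow> real list \<Rightarrow> real \<Rightarrow> real" where
  "u_conf T xs x = x - (\<Sum>y\<leftarrow>xs. real_of_int \<lfloor>(x - y) / real T\<rfloor>)"

definition F1 :: "real \<Rightarrow> nat \<Rightarrow> real list \<Rightarrow> ennreal" where
  "F1 s T xs = (\<integral>\<^sup>+ x. indicator {0..real T} x *
      (\<integral>\<^sup>+ y. ennreal (\<bar>u_conf T xs x - u_conf T xs y\<bar> / \<bar>x - y\<bar> powr (1 + s)) \<partial>lborel) \<partial>lborel)"

end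

theory Submission
  imports Defs
begin

definition fl :: "real \<Rightarrow> real \<Rightarrow> real \<Rightarrow> int" where
  "fl P c z = \<lfloor>(z - c) / P\<rfloor>"

definition Win :: "real \<Rightarrow> real \<Rightarrow> real \<Rightarrow> real set" where
  "Win P c w = {x. \<exists>k::int. c + k * P \<le> x \<and> x < c + k * P + w}"

lemma fl_bounds:
  assumes P: "0 < P"
  shows "c + real_of_int (fl P c x) * P \<le> x" "x < c + (real_of_int (fl P c x) + 1) * P"
proof -
  have "real_of_int (fl P c x) \<le> (x - c) / P" unfolding fl_def by (rule of_int_floor_le)
  then show "c + real_of_int (fl P c x) * P \<le> x" using P by (simp add: le_divide_eq)
  have "(x - c) / P < real_of_int (fl P c x) + 1" unfolding fl_def by (rule real_of_int_floor_add_one_gt)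
  then show "x < c + (real_of_int (fl P c x) + 1) * P" using P by (simp add: divide_less_eq)
qed

lemma fl_eqI:
  assumes P: "0 < P" and "c + real_of_int k * P \<le> x" "x < c + (real_of_int k + 1) * P"
  shows "fl P c x = k"
proof -
  have "real_of_int k \<le> (x - c) / P" using assms by (simp add: le_divide_eq)
  moreover have "(x - c) / P < real_of_int k + 1" using assms by (simp add: divide_less_eq)
  ultimately show ?thesis unfolding fl_def by (simp add: floor_eq_iff)
qed

lemma int_of_mult_less:
  assumes P: "0 < P" and "real_of_int j * P < real_of_int k * P"
  shows "j < k"
proof -
  have "real_of_int j < real_of_int k" using assms by (simp add: mult_less_cancel_right)
  then show ?thesis by simp
qed

lemma fl_diff:
  assumes P: "0 < P" and w: "0 \<le> w" "w < P"
  shows "real_of_int (fl P c x - fl P c (x - w)) = indicator (Win P c w) x"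
proof -
  define k where "k = fl P c x"
  have k1: "c + k * P \<le> x" and k2: "x < c + (k+1) * P"
    using fl_bounds[OF P, where c=c and x=x] unfolding k_def by auto
  show ?thesis
  proof (cases "x < c + k * P + w")
    case True
    have "fl P c (x - w) = k - 1"
      by (rule fl_eqI[OF P]) (use True k1 w P in \<open>auto simp: algebra_simps\<close>)
    moreover have "x \<in> Win P c w" unfolding Win_def using True k1 by auto
    ultimately show ?thesis unfolding k_def by simp
  next
    case False
    have "fl P c (x - w) = k"
      by (rule fl_eqI[OF P]) (use False k2 w P in \<open>auto simp: algebra_simps\<close>)
    moreover have "x \<notin> Win P c w"
    proof
      assume "x \<in> Win P c w"
      then obtain j :: int where j: "c + j * P \<le> x" "x < c + j * P + w" unfolding Win_def by auto
      have "real_of_int j * P < real_of_int (k+1) * P" using j k2 by auto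
      then have "j < k + 1" by (rule int_of_mult_less[OF P])
      moreover have "real_of_int k * P < real_of_int (j+1) * P" using j k1 w by (auto simp: algebra_simps)
      then have "k < j + 1" by (rule int_of_mult_less[OF P])
      ultimately have "j = k" by simp
      then show False using j False by simp
    qed
    ultimately show ?thesis unfolding k_def by simp
  qed
qed

lemma win_shift_mem:
  "x \<in> Win P c w \<longleftrightarrow> x \<in> Win P (c + real_of_int j * P) w"
proof
  assume "x \<in> Win P c w"
  then obtain k :: int where k: "c + k * P \<le> x" "x < c + k * P + w" unfolding Win_def by auto
  have e: "c + real_of_int k * P = c + real_of_int j * P + real_of_int (k - j) * P"
    by (simp add: left_diff_distrib)
  show "x \<in> Win P (c + real_of_int j * P) w"
    unfolding Win_def using k e by (metis (mono_tags, lifting) mem_Collect_eq)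
next
  assume "x \<in> Win P (c + real_of_int j * P) w"
  then obtain k :: int where k: "c + j * P + k * P \<le> x" "x < c + j * P + k * P + w" unfolding Win_def by auto
  have e: "c + real_of_int j * P + real_of_int k * P = c + real_of_int (j + k) * P"
    by (simp add: distrib_right)
  show "x \<in> Win P c w"
    unfolding Win_def using k e by (metis (mono_tags, lifting) mem_Collect_eq)
qed

lemma win_shift: "Win P c w = Win P (c + real_of_int j * P) w"
  using win_shift_mem[of _ P c w j] by blast

lemma win_measure:
  assumes P: "0 < P" and w: "0 \<le> w" "w \<le> P"
  shows "emeasure lborel ({0..P} \<inter> Win P c w) \<le> ennreal (3 * w)"
proof -
  define c' where "c' = c + real_of_int (- fl P 0 c) * P"
  have c'0: "0 \<le> c'" and c'1: "c' < P"
    using fl_bounds[OF P, where c=0 and x=c] unfolding c'_def by (auto simp: algebra_simps)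
  have W: "Win P c w = Win P c' w" unfolding c'_def by (rule win_shift)
  have sub: "{0..P} \<inter> Win P c' w \<subseteq> {c' - P..<c' - P + w} \<union> {c'..<c' + w} \<union> {c' + P..<c' + P + w}"
  proof
    fix x assume "x \<in> {0..P} \<inter> Win P c' w"
    then obtain k :: int where x: "0 \<le> x" "x \<le> P" "c' + k * P \<le> x" "x < c' + k * P + w"
      unfolding Win_def by auto
    have "real_of_int k * P < real_of_int 2 * P" using x c'0 P by linarith
    then have k1: "k < 2" by (rule int_of_mult_less[OF P])
    have "real_of_int (-2) * P < real_of_int k * P" using x c'1 w by linarith
    then have k2: "-2 < k" by (rule int_of_mult_less[OF P])
    have "k = -1 \<or> k = 0 \<or> k = 1" using k1 k2 by linarith
    moreover have "k = -1 \<Longrightarrow> x \<in> {c' - P..<c' - P + w}" using x by simp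
    moreover have "k = 0 \<Longrightarrow> x \<in> {c'..<c' + w}" using x by simp
    moreover have "k = 1 \<Longrightarrow> x \<in> {c' + P..<c' + P + w}" using x by simp
    ultimately show "x \<in> {c' - P..<c' - P + w} \<union> {c'..<c' + w} \<union> {c' + P..<c' + P + w}"
      by blast
  qed
  have "emeasure lborel ({0..P} \<inter> Win P c w) \<le>
      emeasure lborel ({c' - P..<c' - P + w} \<union> {c'..<c' + w} \<union> {c' + P..<c' + P + w})"
    using sub W by (intro emeasure_mono) auto
  also have "\<dots> \<le> emeasure lborel ({c' - P..<c' - P + w} \<union> {c'..<c' + w}) + emeasure lborel {c' + P..<c' + P + w}"
    by (rule emeasure_subadditive) auto
  also have "\<dots> \<le> emeasure lborel {c' - P..<c' - P + w} + emeasure lborel {c'..<c' + w} + emeasure lborel {c' + P..<c' + P + w}"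
    by (intro add_mono emeasure_subadditive) auto
  also have "\<dots> = ennreal w + ennreal w + ennreal w"
    using w by simp
  also have "\<dots> = ennreal (3 * w)"
    using w by (simp add: ennreal_plus[symmetric] del: ennreal_plus)
  finally show ?thesis .
qed

lemma sum_list_insort:
  "(\<Sum>y\<leftarrow>insort p L. f y) = f p + (\<Sum>y\<leftarrow>L. (f y :: real))"
  by (induction L) auto

lemma sum_list_count_split:
  "(\<Sum>y\<leftarrow>L. (f y :: real)) = real (length (filter (\<lambda>y. y = a) L)) * f a + (\<Sum>y\<leftarrow>filter (\<lambda>y. y \<noteq> a) L. f y)"
  by (induction L) (auto simp: algebra_simps)

lemma u_conf_fl: "u_conf T L x = x - (\<Sum>y\<leftarrow>L. real_of_int (fl (real T) y x))"
  unfolding u_conf_def fl_def by simp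

lemma fl_shift_pt:
  "fl P (p + t) x = fl P p (x - t)" "fl P (p - t) x = fl P p (x + t)"
  unfolding fl_def by (simp_all add: algebra_simps)

lemma fl_period_pt:
  assumes "0 < P" shows "fl P (p + P) x = fl P p x - 1"
proof -
  have "(x - (p + P)) / P = (x - p) / P - 1" using assms by (simp add: field_simps)
  then show ?thesis unfolding fl_def by simp
qed

lemma fl_period_x:
  assumes "0 < P" shows "fl P p (x + P) = fl P p x + 1"
proof -
  have "(x + P - p) / P = (x - p) / P + 1" using assms by (simp add: field_simps)
  then show ?thesis unfolding fl_def by simp
qed

lemma u_conf_periodic:
  assumes "length L = T" "0 < T"
  shows "u_conf T L (x + real T) = u_conf T L x"
proof -
  have "(\<Sum>y\<leftarrow>L. real_of_int (fl (real T) y (x + real T))) = (\<Sum>y\<leftarrow>L. real_of_int (fl (real T) y x) + 1)"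
    using assms by (simp add: fl_period_x)
  also have "\<dots> = (\<Sum>y\<leftarrow>L. real_of_int (fl (real T) y x)) + real T"
    using assms(1) by (simp add: sum_list_addf sum_list_triv)
  finally show ?thesis unfolding u_conf_fl by simp
qed

lemma u_conf_step:
  assumes P: "0 < real T" and t: "0 \<le> t" "t < real T"
  shows "u_conf T L z - u_conf T L (z - t) = t - (\<Sum>c\<leftarrow>L. indicator (Win (real T) c t) z)"
proof -
  have "(\<Sum>c\<leftarrow>L. real_of_int (fl (real T) c z)) - (\<Sum>c\<leftarrow>L. real_of_int (fl (real T) c (z - t)))
      = (\<Sum>c\<leftarrow>L. real_of_int (fl (real T) c z - fl (real T) c (z - t)))"
    by (induction L) auto
  also have "\<dots> = (\<Sum>c\<leftarrow>L. indicator (Win (real T) c t) z)"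
    using fl_diff[OF P t] by simp
  finally show ?thesis unfolding u_conf_fl by simp
qed

lemma key_ineq:
  fixes A A' cx cy ox oy m :: real
  assumes c: "cx = 0 \<or> cx = 1" "cy = 0 \<or> cy = 1" and o: "0 \<le> ox" "0 \<le> oy" and m: "2 \<le> m"
    and AA: "A' = A + (m * cx + ox) - (m * cy + oy)"
  shows "\<bar>A + (cx - cy)\<bar> + \<bar>A' - (cx - cy)\<bar> \<le> \<bar>A\<bar> + \<bar>A'\<bar>
          + 2 * (cx * (if oy = 0 then 0 else 1)) + 2 * (cy * (if ox = 0 then 0 else 1))"
proof -
  consider "cx = 0" "cy = 0" | "cx = 1" "cy = 1" | "cx = 1" "cy = 0" | "cx = 0" "cy = 1"
    using c by blast
  then show ?thesis
  proof cases
    case 1 then show ?thesis by simp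
  next
    case 2 then show ?thesis by simp
  next
    case 3
    show ?thesis
    proof (cases "oy = 0")
      case True
      then have "A' \<ge> A + 2" using AA 3 m o by simp
      then show ?thesis using 3 True by (simp add: abs_if)
    next
      case False
      have "\<bar>A + 1\<bar> \<le> \<bar>A\<bar> + 1" "\<bar>A' - 1\<bar> \<le> \<bar>A'\<bar> + 1" by linarith+
      then show ?thesis using 3 False by simp
    qed
  next
    case 4
    show ?thesis
    proof (cases "ox = 0")
      case True
      then have "A' \<le> A - 2" using AA 4 m o by simp
      then show ?thesis using 4 True by (simp add: abs_if)
    next
      case False
      have "\<bar>A - 1\<bar> \<le> \<bar>A\<bar> + 1" "\<bar>A' + 1\<bar> \<le> \<bar>A'\<bar> + 1" by linarith+
      then show ?thesis using 4 False by simp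
    qed
  qed
qed

lemma key_gain:
  fixes A A' ox m :: real
  assumes o: "0 \<le> ox" and m: "2 \<le> m" and AA: "A' = A + (m + ox)"
    and A: "-1 \<le> A" "A \<le> 0"
  shows "\<bar>A + 1\<bar> + \<bar>A' - 1\<bar> \<le> \<bar>A\<bar> + \<bar>A'\<bar> + 2 * A"
proof -
  have "A' \<ge> 1" using AA o m A by linarith
  then show ?thesis using A by (simp add: abs_if)
qed

lemma sum_ind_nonneg: "0 \<le> (\<Sum>c\<leftarrow>L. indicator (S c) x :: real)"
  by (induction L) auto

lemma sum_ind_ge1:
  assumes "c \<in> set L" "x \<in> S c"
  shows "1 \<le> (\<Sum>c\<leftarrow>L. indicator (S c) x :: real)"
  using assms
proof (induction L)
  case Nil then show ?case by simp
next
  case (Cons d L)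
  show ?case
  proof (cases "c = d")
    case True
    then show ?thesis using Cons.prems sum_ind_nonneg[of S x L] by simp
  next
    case False
    then have "1 \<le> (\<Sum>c\<leftarrow>L. indicator (S c) x :: real)" using Cons by simp
    moreover have "0 \<le> (indicator (S d) x :: real)" by simp
    ultimately show ?thesis by (simp only: list.map sum_list.Cons; linarith)
  qed
qed

lemma sum_ind_zero:
  "(\<forall>c\<in>set L. x \<notin> S c) \<Longrightarrow> (\<Sum>c\<leftarrow>L. indicator (S c) x :: real) = 0"
  by (induction L) auto

lemma sum_ind_ne0:
  assumes "(\<Sum>c\<leftarrow>L. indicator (S c) x :: real) \<noteq> 0"
  shows "\<exists>c\<in>set L. x \<in> S c"
  using assms sum_ind_zero[of L x S] by blast

locale S0 =
  fixes s :: real and T :: nat and xs :: "real list" and a :: real and g :: real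
  assumes s: "0 < s" "s < 1"
    and cfg: "config T xs" and a_in: "a \<in> set xs" and m2: "2 \<le> mult xs a"
    and g: "0 < g" "g \<le> 1"
    and gap: "\<And>c k. c \<in> set xs \<Longrightarrow> c \<noteq> a \<or> k \<noteq> 0 \<Longrightarrow> g < \<bar>c + real_of_int k * real T - a\<bar>"
begin

abbreviation "P \<equiv> real T"
abbreviation "u \<equiv> u_conf T xs"
abbreviation "L0 \<equiv> remove1 a xs"
definition "uP t = u_conf T (insort (a + t) L0)"
definition "pm t = (if t \<le> a then a - t else a - t + P)"
definition "uM t = u_conf T (insort (pm t) L0)"
definition "ia t z = (indicator (Win P a t) z :: real)"
definition "Ot t z = (\<Sum>c\<leftarrow>filter (\<lambda>c. c \<noteq> a) xs. indicator (Win P c t) z :: real)"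
definition "Zs t = {z. \<exists>c\<in>set xs. c \<noteq> a \<and> (\<exists>j::int. \<bar>z - (c - a + j * P)\<bar> < t \<or> \<bar>z + (c - a + j * P)\<bar> < t)}"
definition "m = real (mult xs a)"

lemma len: "length xs = T" and srt: "sorted xs" and rng: "\<And>x. x \<in> set xs \<Longrightarrow> 0 \<le> x \<and> x < P"
  using cfg unfolding config_def by auto

lemma a_rng: "0 \<le> a" "a < P" using rng[OF a_in] by auto

lemma T_pos: "0 < T" using a_rng by linarith

lemma P_pos: "0 < P" using T_pos by simp

lemma g_lt_P: "g < P"
  using gap[OF a_in, of 1] by simp

lemma m_ge: "2 \<le> m" unfolding m_def using m2 by simp

lemma u_remove: "u z = z - real_of_int (fl P a z) - (\<Sum>y\<leftarrow>L0. real_of_int (fl P y z))"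
  unfolding u_conf_fl using sum_list_map_remove1[OF a_in, of "\<lambda>y. real_of_int (fl P y z)"] by simp

lemma uP_eq:
  assumes t: "0 \<le> t" "t < P"
  shows "uP t z = u z + ia t z"
proof -
  have "uP t z = z - real_of_int (fl P a (z - t)) - (\<Sum>y\<leftarrow>L0. real_of_int (fl P y z))"
    unfolding uP_def u_conf_fl sum_list_insort fl_shift_pt by simp
  then show ?thesis using u_remove[of z] fl_diff[OF P_pos t, of a z] unfolding ia_def by simp
qed

lemma uM_eq:
  assumes t: "0 \<le> t" "t < P"
  shows "uM t z = u z - ia t (z + t) + (if t \<le> a then 0 else 1)"
proof -
  have "fl P (pm t) z = fl P a (z + t) - (if t \<le> a then 0 else 1)"
    unfolding pm_def using fl_period_pt[OF P_pos, of "a - t" z] by (simp add: fl_shift_pt)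
  then have "uM t z = z - real_of_int (fl P a (z + t)) + (if t \<le> a then 0 else 1) - (\<Sum>y\<leftarrow>L0. real_of_int (fl P y z))"
    unfolding uM_def u_conf_fl sum_list_insort by simp
  moreover have "real_of_int (fl P a (z + t) - fl P a z) = ia t (z + t)"
    using fl_diff[OF P_pos t, of a "z + t"] unfolding ia_def by simp
  ultimately show ?thesis using u_remove[of z] by simp
qed

lemma N_split:
  "(\<Sum>c\<leftarrow>xs. indicator (Win P c t) z :: real) = m * ia t z + Ot t z"
  unfolding m_def ia_def Ot_def mult_def using sum_list_count_split[of "\<lambda>c. indicator (Win P c t) z" xs a]
  by simp

lemma u_shift:
  assumes t: "0 \<le> t" "t < P"
  shows "u (z - t) = u z - t + (m * ia t z + Ot t z)"
  using u_conf_step[OF P_pos t, of xs z] N_split[of t z] by simp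

lemma ia_01: "ia t z = 0 \<or> ia t z = 1" unfolding ia_def by (simp add: indicator_def)

lemma Ot_nonneg: "0 \<le> Ot t z" unfolding Ot_def by (rule sum_ind_nonneg)

lemma Zs_I1:
  assumes "x \<in> Win P a t" "y \<in> Win P c t" "c \<in> set xs" "c \<noteq> a"
  shows "y - x \<in> Zs t"
proof -
  obtain k :: int where k: "a + k * P \<le> x" "x < a + k * P + t" using assms(1) unfolding Win_def by auto
  obtain j :: int where j: "c + j * P \<le> y" "y < c + j * P + t" using assms(2) unfolding Win_def by auto
  have e: "c - a + real_of_int (j - k) * P = (c + j * P) - (a + k * P)" by (simp add: left_diff_distrib)
  have "\<bar>(y - x) - (c - a + real_of_int (j - k) * P)\<bar> < t" unfolding e using j k by linarith
  then show ?thesis unfolding Zs_def using assms(3,4) by blast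
qed

lemma Zs_I2:
  assumes "y \<in> Win P a t" "x \<in> Win P c t" "c \<in> set xs" "c \<noteq> a"
  shows "y - x \<in> Zs t"
proof -
  obtain k :: int where k: "a + k * P \<le> y" "y < a + k * P + t" using assms(1) unfolding Win_def by auto
  obtain j :: int where j: "c + j * P \<le> x" "x < c + j * P + t" using assms(2) unfolding Win_def by auto
  have e: "c - a + real_of_int (j - k) * P = (c + j * P) - (a + k * P)" by (simp add: left_diff_distrib)
  have "\<bar>(y - x) + (c - a + real_of_int (j - k) * P)\<bar> < t" unfolding e using j k by linarith
  then show ?thesis unfolding Zs_def using assms(3,4) by blast
qed

lemma pointwise_bad:
  assumes t: "0 < t" "t < P"
  shows "\<bar>uP t x - uP t y\<bar> + \<bar>uM t (x - t) - uM t (y - t)\<bar>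
     \<le> \<bar>u x - u y\<bar> + \<bar>u (x - t) - u (y - t)\<bar> + 2 * indicator (Zs t) (y - x) * (ia t x + Ot t x)"
proof -
  have t': "0 \<le> t" "t < P" using t by auto
  define A where "A = u x - u y"
  define A' where "A' = u (x - t) - u (y - t)"
  define cx where "cx = ia t x"
  define cy where "cy = ia t y"
  define ox where "ox = Ot t x"
  define oy where "oy = Ot t y"
  have e1: "uP t x - uP t y = A + (cx - cy)" unfolding A_def cx_def cy_def using uP_eq[OF t'] by simp
  have e2: "uM t (x - t) - uM t (y - t) = A' - (cx - cy)" unfolding A'_def cx_def cy_def using uM_eq[OF t'] by simp
  have AA: "A' = A + (m * cx + ox) - (m * cy + oy)"
    unfolding A'_def A_def cx_def cy_def ox_def oy_def using u_shift[OF t'] by simp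
  have K: "\<bar>A + (cx - cy)\<bar> + \<bar>A' - (cx - cy)\<bar> \<le> \<bar>A\<bar> + \<bar>A'\<bar>
          + 2 * (cx * (if oy = 0 then 0 else 1)) + 2 * (cy * (if ox = 0 then 0 else 1))"
    by (rule key_ineq[OF _ _ _ _ m_ge AA]) (use ia_01 Ot_nonneg in \<open>auto simp: cx_def cy_def ox_def oy_def\<close>)
  have b1: "cx * (if oy = 0 then 0 else 1) \<le> indicator (Zs t) (y - x) * cx"
  proof (cases "cx = 1 \<and> oy \<noteq> 0")
    case True
    then obtain c where c: "c \<in> set (filter (\<lambda>c. c \<noteq> a) xs)" "y \<in> Win P c t"
      using sum_ind_ne0[where L="filter (\<lambda>c. c \<noteq> a) xs" and S="\<lambda>c. Win P c t" and x=y] unfolding oy_def Ot_def by blast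
    have "x \<in> Win P a t" using True unfolding cx_def ia_def by (simp add: indicator_def split: if_splits)
    then have "y - x \<in> Zs t" using Zs_I1 c by auto
    then show ?thesis using True by simp
  next
    case False
    then have "cx * (if oy = 0 then 0 else 1) = 0" using ia_01[of t x] unfolding cx_def by auto
    moreover have "0 \<le> indicator (Zs t) (y - x) * cx"
      using ia_01[of t x] unfolding cx_def by auto
    ultimately show ?thesis by linarith
  qed
  have b2: "cy * (if ox = 0 then 0 else 1) \<le> indicator (Zs t) (y - x) * ox"
  proof (cases "cy = 1 \<and> ox \<noteq> 0")
    case True
    then obtain c where c: "c \<in> set (filter (\<lambda>c. c \<noteq> a) xs)" "x \<in> Win P c t"
      using sum_ind_ne0[where L="filter (\<lambda>c. c \<noteq> a) xs" and S="\<lambda>c. Win P c t" and x=x] unfolding ox_def Ot_def by blast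
    have "1 \<le> ox" unfolding ox_def Ot_def by (rule sum_ind_ge1[where L="filter (\<lambda>c. c \<noteq> a) xs" and S="\<lambda>c. Win P c t" and x=x, OF c])
    have "y \<in> Win P a t" using True unfolding cy_def ia_def by (simp add: indicator_def split: if_splits)
    then have "y - x \<in> Zs t" using Zs_I2 c by auto
    then show ?thesis using True \<open>1 \<le> ox\<close> by auto
  next
    case False
    then have "cy * (if ox = 0 then 0 else 1) = 0" using ia_01[of t y] unfolding cy_def by auto
    moreover have "0 \<le> indicator (Zs t) (y - x) * ox"
      using Ot_nonneg[of t x] unfolding ox_def by auto
    ultimately show ?thesis by linarith
  qed
  have "\<bar>uP t x - uP t y\<bar> + \<bar>uM t (x - t) - uM t (y - t)\<bar> \<le> \<bar>A\<bar> + \<bar>A'\<bar> + 2 * indicator (Zs t) (y - x) * (cx + ox)"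
  proof -
    have "2 * indicator (Zs t) (y - x) * (cx + ox) = 2 * (indicator (Zs t) (y - x) * cx) + 2 * (indicator (Zs t) (y - x) * ox)"
      by (simp add: algebra_simps)
    then show ?thesis unfolding e1 e2 using K b1 b2 by linarith
  qed
  then show ?thesis unfolding A_def A'_def cx_def ox_def .
qed

end

lemma measurable_sum_list_fun[measurable]:
  assumes "\<And>y. f y \<in> borel_measurable M"
  shows "(\<lambda>x. (\<Sum>y\<leftarrow>L. f y x) :: real) \<in> borel_measurable M"
  by (induction L) (use assms in auto)

lemma u_conf_measurable[measurable]: "u_conf T L \<in> borel_measurable borel"
  unfolding u_conf_def by measurable

lemma Win_sets[measurable]: "Win P c w \<in> sets borel"
proof -
  have "Win P c w = (\<Union>k\<in>(UNIV::int set). {c + real_of_int k * P..<c + real_of_int k * P + w})"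
    unfolding Win_def by auto
  also have "\<dots> \<in> sets borel" by (intro sets.countable_UN') auto
  finally show ?thesis .
qed

context S0
begin

lemma Zs_open: "open (Zs t)"
proof -
  have "Zs t = (\<Union>c\<in>set xs - {a}. \<Union>j\<in>(UNIV::int set).
            {z. \<bar>z - (c - a + j * P)\<bar> < t} \<union> {z. \<bar>z + (c - a + j * P)\<bar> < t})"
    unfolding Zs_def by blast
  moreover have "open (\<Union>c\<in>set xs - {a}. \<Union>j\<in>(UNIV::int set).
            {z. \<bar>z - (c - a + j * P)\<bar> < t} \<union> {z. \<bar>z + (c - a + j * P)\<bar> < t})"
    by (intro open_UN open_Un ballI open_Collect_less continuous_intros)
  ultimately show ?thesis by simp
qed

lemma Zs_sets[measurable]: "Zs t \<in> sets borel"
  using Zs_open by auto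

lemma uP_measurable[measurable]: "uP t \<in> borel_measurable borel"
  unfolding uP_def by measurable

lemma uM_measurable[measurable]: "uM t \<in> borel_measurable borel"
  unfolding uM_def by measurable

lemma ia_measurable[measurable]: "ia t \<in> borel_measurable borel"
  unfolding ia_def by measurable

lemma Ot_measurable[measurable]: "Ot t \<in> borel_measurable borel"
  unfolding Ot_def by measurable

lemma gap_win_a:
  assumes t: "0 < t" "t \<le> g / 4" and y: "a + g / 2 \<le> y" "y < a + g"
  shows "y \<notin> Win P a t"
proof
  assume "y \<in> Win P a t"
  then obtain k :: int where k: "a + k * P \<le> y" "y < a + k * P + t" unfolding Win_def by auto
  show False
  proof (cases "k = 0")
    case True then show False using k t y by simp
  next
    case False
    then have "g < \<bar>real_of_int k * P\<bar>" using gap[OF a_in, of k] by simp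
    then show False using k t y by linarith
  qed
qed

lemma gap_win_c:
  assumes t: "0 < t" "t \<le> g / 4" and y: "a + g / 2 \<le> y" "y < a + g"
    and c: "c \<in> set xs" "c \<noteq> a"
  shows "y \<notin> Win P c t"
proof
  assume "y \<in> Win P c t"
  then obtain k :: int where k: "c + k * P \<le> y" "y < c + k * P + t" unfolding Win_def by auto
  have "g < \<bar>c + real_of_int k * P - a\<bar>" using gap[OF c(1), of k] c by simp
  then show False using k t y by linarith
qed

lemma gap_fl:
  assumes x: "a \<le> x" and xy: "x \<le> y" and y: "y < a + g" and c: "c \<in> set xs"
  shows "fl P c y = fl P c x"
proof -
  define k where "k = fl P c x"
  have k1: "c + k * P \<le> x" and k2: "x < c + (k+1) * P"
    using fl_bounds[OF P_pos, where c=c and x=x] unfolding k_def by auto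
  have "y < c + (real_of_int k + 1) * P"
  proof (rule ccontr)
    assume "\<not> y < c + (real_of_int k + 1) * P"
    then have d: "x - a < c + real_of_int (k + 1) * P - a" "c + real_of_int (k + 1) * P - a < g"
      using k2 y by auto
    show False
    proof (cases "c \<noteq> a \<or> k + 1 \<noteq> 0")
      case True
      then have "g < \<bar>c + real_of_int (k + 1) * P - a\<bar>" using gap[OF c] by blast
      then show False using d x by linarith
    next
      case False
      then show False using d x by simp
    qed
  qed
  then have "fl P c y = k" using k1 xy by (intro fl_eqI[OF P_pos]) auto
  then show ?thesis using k_def by simp
qed

lemma u_gap:
  assumes x: "a \<le> x" and xy: "x \<le> y" and y: "y < a + g"
  shows "u x - u y = x - y"
proof -
  have "(\<Sum>c\<leftarrow>xs. real_of_int (fl P c x)) = (\<Sum>c\<leftarrow>xs. real_of_int (fl P c y))"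
    using gap_fl[OF x xy y] by (intro arg_cong[where f=sum_list] map_cong) auto
  then show ?thesis unfolding u_conf_fl by simp
qed

lemma pointwise_gain:
  assumes t: "0 < t" "t \<le> g / 4" and x: "a \<le> x" "x < a + t" and y: "a + g / 2 \<le> y" "y < a + g"
  shows "\<bar>uP t x - uP t y\<bar> + \<bar>uM t (x - t) - uM t (y - t)\<bar> + g / 2
     \<le> \<bar>u x - u y\<bar> + \<bar>u (x - t) - u (y - t)\<bar>"
proof -
  have tP: "0 \<le> t" "t < P" using t g_lt_P by auto
  have cx: "ia t x = 1"
  proof -
    have "x \<in> Win P a t" unfolding Win_def using x by (auto intro!: exI[of _ 0])
    then show ?thesis unfolding ia_def by simp
  qed
  have cy: "ia t y = 0" using gap_win_a[OF t y] unfolding ia_def by simp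
  have oy: "Ot t y = 0" unfolding Ot_def
    by (rule sum_ind_zero) (use gap_win_c[OF t y] in auto)
  define A where "A = u x - u y"
  define A' where "A' = u (x - t) - u (y - t)"
  have xy: "x \<le> y" using x y t by linarith
  have Aeq: "A = x - y" unfolding A_def by (rule u_gap) (use x xy y in auto)
  have e1: "uP t x - uP t y = A + 1" unfolding A_def using uP_eq[OF tP] cx cy by simp
  have e2: "uM t (x - t) - uM t (y - t) = A' - 1" unfolding A'_def using uM_eq[OF tP] cx cy by simp
  have AA: "A' = A + (m + Ot t x)"
    unfolding A'_def A_def using u_shift[OF tP, of x] u_shift[OF tP, of y] cx cy oy by simp
  have G: "\<bar>A + 1\<bar> + \<bar>A' - 1\<bar> \<le> \<bar>A\<bar> + \<bar>A'\<bar> + 2 * A"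
    by (rule key_gain[OF Ot_nonneg m_ge AA]) (use Aeq x y g xy in auto)
  have "2 * A \<le> - (g / 2)" using Aeq x y t by linarith
  then show ?thesis unfolding e1 e2 A_def[symmetric] A'_def[symmetric] using G by linarith
qed

lemma pointwise:
  assumes t: "0 < t" "t \<le> g / 4"
  shows "\<bar>uP t x - uP t y\<bar> + \<bar>uM t (x - t) - uM t (y - t)\<bar>
      + g / 2 * indicator {a..<a+t} x * indicator {a + g/2..<a+g} y
     \<le> \<bar>u x - u y\<bar> + \<bar>u (x - t) - u (y - t)\<bar> + 2 * indicator (Zs t) (y - x) * (ia t x + Ot t x)"
proof -
  have tP: "0 < t" "t < P" using t g_lt_P by auto
  have nn: "0 \<le> 2 * indicator (Zs t) (y - x) * (ia t x + Ot t x)"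
    using ia_01[of t x] Ot_nonneg[of t x] by auto
  show ?thesis
  proof (cases "x \<in> {a..<a+t} \<and> y \<in> {a + g/2..<a+g}")
    case True
    then show ?thesis using pointwise_gain[OF t, of x y] nn by simp
  next
    case False
    then have "g / 2 * indicator {a..<a+t} x * indicator {a + g/2..<a+g} y = (0::real)"
      by (auto simp: indicator_def)
    then show ?thesis using pointwise_bad[OF tP, of x y] by linarith
  qed
qed

end

definition En :: "real \<Rightarrow> real \<Rightarrow> (real \<Rightarrow> real) \<Rightarrow> ennreal" where
  "En s P v = (\<integral>\<^sup>+ x. indicator {0..P} x *
      (\<integral>\<^sup>+ y. ennreal (\<bar>v x - v y\<bar> / \<bar>x - y\<bar> powr (1 + s)) \<partial>lborel) \<partial>lborel)"

lemma F1_En: "F1 s T xs = En s (real T) (u_conf T xs)"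
  unfolding F1_def En_def by simp

lemma trans_nn:
  fixes f :: "real \<Rightarrow> ennreal"
  assumes [measurable]: "f \<in> borel_measurable borel"
  shows "(\<integral>\<^sup>+y. f y \<partial>lborel) = (\<integral>\<^sup>+y. f (y + c) \<partial>lborel)"
  using nn_integral_real_affine[of f 1 c] by (simp add: add.commute)

lemma per_shift:
  fixes I :: "real \<Rightarrow> ennreal"
  assumes [measurable]: "I \<in> borel_measurable borel" and per: "\<And>x. I (x + P) = I x"
    and t: "0 \<le> t" "t \<le> P"
  shows "(\<integral>\<^sup>+x. indicator {0..P} x * I (x - t) \<partial>lborel) = (\<integral>\<^sup>+x. indicator {0..P} x * I x \<partial>lborel)"
proof -
  have "(\<integral>\<^sup>+x. indicator {0..P} x * I (x - t) \<partial>lborel)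
      = (\<integral>\<^sup>+x. indicator {0..P} (x + t) * I (x + t - t) \<partial>lborel)"
    by (rule trans_nn) measurable
  also have "\<dots> = (\<integral>\<^sup>+x. indicator {-t..<0} x * I x + indicator {0..P-t} x * I x \<partial>lborel)"
    using t by (intro nn_integral_cong) (auto simp: indicator_def)
  also have "\<dots> = (\<integral>\<^sup>+x. indicator {-t..<0} x * I x \<partial>lborel) + (\<integral>\<^sup>+x. indicator {0..P-t} x * I x \<partial>lborel)"
    by (rule nn_integral_add) measurable
  also have "(\<integral>\<^sup>+x. indicator {-t..<0} x * I x \<partial>lborel) = (\<integral>\<^sup>+x. indicator {-t..<0} (x + - P) * I (x + - P) \<partial>lborel)"
    by (rule trans_nn) measurable
  also have "\<dots> = (\<integral>\<^sup>+x. indicator {P-t..<P} x * I x \<partial>lborel)"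
  proof (intro nn_integral_cong)
    fix x
    have "I (x + - P) = I x" using per[of "x - P"] by simp
    then show "indicator {-t..<0} (x + - P) * I (x + - P) = indicator {P-t..<P} x * I x"
      by (auto simp: indicator_def)
  qed
  also have "(\<integral>\<^sup>+x. indicator {P-t..<P} x * I x \<partial>lborel) + (\<integral>\<^sup>+x. indicator {0..P-t} x * I x \<partial>lborel)
      = (\<integral>\<^sup>+x. indicator {P-t..<P} x * I x + indicator {0..P-t} x * I x \<partial>lborel)"
    by (rule nn_integral_add[symmetric]) measurable
  also have "\<dots> = (\<integral>\<^sup>+x. indicator {0..P} x * I x \<partial>lborel)"
  proof (rule nn_integral_cong_AE)
    have "AE x in lborel. x \<noteq> P - t" "AE x in lborel. x \<noteq> P" by (rule AE_lborel_singleton)+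
    then show "AE x in lborel. indicator {P-t..<P} x * I x + indicator {0..P-t} x * I x = indicator {0..P} x * I x"
    proof eventually_elim
      case (elim x)
      then show ?case using t by (auto simp: indicator_def)
    qed
  qed
  finally show ?thesis .
qed

lemma En_shift:
  assumes [measurable]: "v \<in> borel_measurable borel" and per: "\<And>x. v (x + P) = v x"
    and t: "0 \<le> t" "t \<le> P"
  shows "(\<integral>\<^sup>+ x. indicator {0..P} x *
      (\<integral>\<^sup>+ y. ennreal (\<bar>v (x - t) - v (y - t)\<bar> / \<bar>x - y\<bar> powr (1 + s)) \<partial>lborel) \<partial>lborel) = En s P v"
proof -
  define J where "J x = (\<integral>\<^sup>+ y. ennreal (\<bar>v x - v y\<bar> / \<bar>x - y\<bar> powr (1 + s)) \<partial>lborel)" for x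
  have Jm[measurable]: "J \<in> borel_measurable borel" unfolding J_def by measurable
  have inner: "(\<integral>\<^sup>+ y. ennreal (\<bar>v (x - t) - v (y - t)\<bar> / \<bar>x - y\<bar> powr (1 + s)) \<partial>lborel) = J (x - t)" for x
  proof -
    have "(\<integral>\<^sup>+ y. ennreal (\<bar>v (x - t) - v (y - t)\<bar> / \<bar>x - y\<bar> powr (1 + s)) \<partial>lborel)
        = (\<integral>\<^sup>+ y. ennreal (\<bar>v (x - t) - v (y + t - t)\<bar> / \<bar>x - (y + t)\<bar> powr (1 + s)) \<partial>lborel)"
      by (rule trans_nn) measurable
    also have "\<dots> = J (x - t)" unfolding J_def by (simp add: algebra_simps)
    finally show ?thesis .
  qed
  have perJ: "J (x + P) = J x" for x
  proof -
    have "J (x + P) = (\<integral>\<^sup>+ y. ennreal (\<bar>v (x + P) - v (y + P)\<bar> / \<bar>x + P - (y + P)\<bar> powr (1 + s)) \<partial>lborel)"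
      unfolding J_def by (rule trans_nn) measurable
    also have "\<dots> = J x" unfolding J_def per by simp
    finally show ?thesis .
  qed
  show ?thesis unfolding inner En_def J_def[symmetric] by (rule per_shift[OF Jm perJ t])
qed

lemma sum3_eq:
  fixes f1 f2 f3 :: "real \<Rightarrow> real \<Rightarrow> real"
  assumes [measurable]: "(\<lambda>(x, y). f1 x y) \<in> borel_measurable (lborel \<Otimes>\<^sub>M lborel)"
    "(\<lambda>(x, y). f2 x y) \<in> borel_measurable (lborel \<Otimes>\<^sub>M lborel)"
    "(\<lambda>(x, y). f3 x y) \<in> borel_measurable (lborel \<Otimes>\<^sub>M lborel)"
    and nn: "\<And>x y. 0 \<le> f1 x y" "\<And>x y. 0 \<le> f2 x y" "\<And>x y. 0 \<le> f3 x y"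
    and S[measurable]: "S \<in> sets borel"
  shows "(\<integral>\<^sup>+x. indicator S x * (\<integral>\<^sup>+y. ennreal (f1 x y) \<partial>lborel) \<partial>lborel)
       + (\<integral>\<^sup>+x. indicator S x * (\<integral>\<^sup>+y. ennreal (f2 x y) \<partial>lborel) \<partial>lborel)
       + (\<integral>\<^sup>+x. indicator S x * (\<integral>\<^sup>+y. ennreal (f3 x y) \<partial>lborel) \<partial>lborel)
     = (\<integral>\<^sup>+x. indicator S x * (\<integral>\<^sup>+y. ennreal (f1 x y + f2 x y + f3 x y) \<partial>lborel) \<partial>lborel)"
proof -
  have inner: "(\<integral>\<^sup>+y. ennreal (f1 x y + f2 x y + f3 x y) \<partial>lborel)
      = (\<integral>\<^sup>+y. ennreal (f1 x y) \<partial>lborel) + (\<integral>\<^sup>+y. ennreal (f2 x y) \<partial>lborel)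
        + (\<integral>\<^sup>+y. ennreal (f3 x y) \<partial>lborel)" for x
  proof -
    have "(\<integral>\<^sup>+y. ennreal (f1 x y + f2 x y + f3 x y) \<partial>lborel)
        = (\<integral>\<^sup>+y. (ennreal (f1 x y) + ennreal (f2 x y)) + ennreal (f3 x y) \<partial>lborel)"
      using nn by (intro nn_integral_cong) (simp add: ennreal_plus[symmetric] del: ennreal_plus)
    also have "\<dots> = (\<integral>\<^sup>+y. ennreal (f1 x y) + ennreal (f2 x y) \<partial>lborel) + (\<integral>\<^sup>+y. ennreal (f3 x y) \<partial>lborel)"
      by (rule nn_integral_add) measurable
    also have "(\<integral>\<^sup>+y. ennreal (f1 x y) + ennreal (f2 x y) \<partial>lborel)
        = (\<integral>\<^sup>+y. ennreal (f1 x y) \<partial>lborel) + (\<integral>\<^sup>+y. ennreal (f2 x y) \<partial>lborel)"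
      by (rule nn_integral_add) measurable
    finally show ?thesis .
  qed
  have "(\<integral>\<^sup>+x. indicator S x * (\<integral>\<^sup>+y. ennreal (f1 x y + f2 x y + f3 x y) \<partial>lborel) \<partial>lborel)
      = (\<integral>\<^sup>+x. (indicator S x * (\<integral>\<^sup>+y. ennreal (f1 x y) \<partial>lborel)
          + indicator S x * (\<integral>\<^sup>+y. ennreal (f2 x y) \<partial>lborel))
          + indicator S x * (\<integral>\<^sup>+y. ennreal (f3 x y) \<partial>lborel) \<partial>lborel)"
    unfolding inner by (simp add: distrib_left)
  also have "\<dots> = (\<integral>\<^sup>+x. indicator S x * (\<integral>\<^sup>+y. ennreal (f1 x y) \<partial>lborel)
          + indicator S x * (\<integral>\<^sup>+y. ennreal (f2 x y) \<partial>lborel) \<partial>lborel)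
        + (\<integral>\<^sup>+x. indicator S x * (\<integral>\<^sup>+y. ennreal (f3 x y) \<partial>lborel) \<partial>lborel)"
    by (rule nn_integral_add) measurable
  also have "(\<integral>\<^sup>+x. indicator S x * (\<integral>\<^sup>+y. ennreal (f1 x y) \<partial>lborel)
          + indicator S x * (\<integral>\<^sup>+y. ennreal (f2 x y) \<partial>lborel) \<partial>lborel)
      = (\<integral>\<^sup>+x. indicator S x * (\<integral>\<^sup>+y. ennreal (f1 x y) \<partial>lborel) \<partial>lborel)
        + (\<integral>\<^sup>+x. indicator S x * (\<integral>\<^sup>+y. ennreal (f2 x y) \<partial>lborel) \<partial>lborel)"
    by (rule nn_integral_add) measurable
  finally show ?thesis by simp
qed

lemma sum3_mono:
  fixes f1 f2 f3 h1 h2 h3 :: "real \<Rightarrow> real \<Rightarrow> real"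
  assumes [measurable]: "(\<lambda>(x, y). f1 x y) \<in> borel_measurable (lborel \<Otimes>\<^sub>M lborel)"
    "(\<lambda>(x, y). f2 x y) \<in> borel_measurable (lborel \<Otimes>\<^sub>M lborel)"
    "(\<lambda>(x, y). f3 x y) \<in> borel_measurable (lborel \<Otimes>\<^sub>M lborel)"
    "(\<lambda>(x, y). h1 x y) \<in> borel_measurable (lborel \<Otimes>\<^sub>M lborel)"
    "(\<lambda>(x, y). h2 x y) \<in> borel_measurable (lborel \<Otimes>\<^sub>M lborel)"
    "(\<lambda>(x, y). h3 x y) \<in> borel_measurable (lborel \<Otimes>\<^sub>M lborel)"
    and nn: "\<And>x y. 0 \<le> f1 x y" "\<And>x y. 0 \<le> f2 x y" "\<And>x y. 0 \<le> f3 x y"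
      "\<And>x y. 0 \<le> h1 x y" "\<And>x y. 0 \<le> h2 x y" "\<And>x y. 0 \<le> h3 x y"
    and le: "\<And>x y. f1 x y + f2 x y + f3 x y \<le> h1 x y + h2 x y + h3 x y"
    and S[measurable]: "S \<in> sets borel"
  shows "(\<integral>\<^sup>+x. indicator S x * (\<integral>\<^sup>+y. ennreal (f1 x y) \<partial>lborel) \<partial>lborel)
       + (\<integral>\<^sup>+x. indicator S x * (\<integral>\<^sup>+y. ennreal (f2 x y) \<partial>lborel) \<partial>lborel)
       + (\<integral>\<^sup>+x. indicator S x * (\<integral>\<^sup>+y. ennreal (f3 x y) \<partial>lborel) \<partial>lborel)
     \<le> (\<integral>\<^sup>+x. indicator S x * (\<integral>\<^sup>+y. ennreal (h1 x y) \<partial>lborel) \<partial>lborel)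
       + (\<integral>\<^sup>+x. indicator S x * (\<integral>\<^sup>+y. ennreal (h2 x y) \<partial>lborel) \<partial>lborel)
       + (\<integral>\<^sup>+x. indicator S x * (\<integral>\<^sup>+y. ennreal (h3 x y) \<partial>lborel) \<partial>lborel)"
  unfolding sum3_eq[of f1 f2 f3, OF assms(1-3) nn(1-3) S] sum3_eq[of h1 h2 h3, OF assms(4-6) nn(4-6) S]
  by (intro nn_integral_mono mult_left_mono ennreal_leI le) auto

lemma fl_meas[measurable]: "(\<lambda>z. real_of_int (fl P c z)) \<in> borel_measurable borel"
  unfolding fl_def by measurable

lemma near_half:
  assumes s: "0 < s" "s < 1"
  shows "(\<integral>\<^sup>+z. ennreal (indicator {0..1} z * z powr (- s)) \<partial>lborel) = ennreal (1 / (1 - s))"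
proof -
  have "((\<lambda>x. x powr (- s)) has_integral (1 powr (- s + 1) / (- s + 1))) {0..1}"
    by (rule has_integral_powr_from_0) (use s in auto)
  then have "((\<lambda>x. x powr (- s)) has_integral (1 / (1 - s))) {0..1}" by simp
  then have "((\<lambda>x. if x \<in> {0..1} then x powr (- s) else 0) has_integral (1 / (1 - s))) UNIV"
    by (subst has_integral_restrict_UNIV)
  moreover have "(\<lambda>x. if x \<in> {0..1} then x powr (- s) else 0) = (\<lambda>z. indicator {0..1} z * z powr (- s))"
    by (auto simp: indicator_def)
  ultimately have I: "((\<lambda>z. indicator {0..1} z * z powr (- s)) has_integral (1 / (1 - s))) UNIV" by simp
  show ?thesis
    by (rule nn_integral_has_integral_lborel[OF _ _ I]) auto
qed

lemma tail_half:
  assumes s: "0 < s" and r: "0 < r"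
  shows "(\<integral>\<^sup>+z. ennreal (indicator {r..} z * z powr (- 1 - s)) \<partial>lborel) = ennreal (r powr (- s) / s)"
proof -
  have "((\<lambda>x. x powr (- 1 - s)) has_integral - (r powr (- 1 - s + 1)) / (- 1 - s + 1)) {r..}"
    by (rule has_integral_powr_to_inf) (use s r in auto)
  then have "((\<lambda>x. x powr (- 1 - s)) has_integral (r powr (- s) / s)) {r..}" by simp
  then have "((\<lambda>x. if x \<in> {r..} then x powr (- 1 - s) else 0) has_integral (r powr (- s) / s)) UNIV"
    by (subst has_integral_restrict_UNIV)
  moreover have "(\<lambda>x. if x \<in> {r..} then x powr (- 1 - s) else 0) = (\<lambda>z. indicator {r..} z * z powr (- 1 - s))"
    by (auto simp: indicator_def)
  ultimately have I: "((\<lambda>z. indicator {r..} z * z powr (- 1 - s)) has_integral (r powr (- s) / s)) UNIV" by simp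
  show ?thesis
    by (rule nn_integral_has_integral_lborel[OF _ _ I]) (use r in auto)
qed

lemma reflect_nn:
  fixes f :: "real \<Rightarrow> ennreal"
  assumes [measurable]: "f \<in> borel_measurable borel"
  shows "(\<integral>\<^sup>+y. f (- y) \<partial>lborel) = (\<integral>\<^sup>+y. f y \<partial>lborel)"
  using nn_integral_real_affine[of f "-1" 0] by simp

lemma near_fin:
  assumes s: "0 < s" "s < 1"
  shows "(\<integral>\<^sup>+z. ennreal (indicator {z. \<bar>z\<bar> < 1} z * \<bar>z\<bar> powr (- s)) \<partial>lborel) < \<infinity>"
proof -
  let ?h = "\<lambda>z::real. ennreal (indicator {0..1} z * z powr (- s))"
  have "(\<integral>\<^sup>+z. ennreal (indicator {z. \<bar>z\<bar> < 1} z * \<bar>z\<bar> powr (- s)) \<partial>lborel)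
      \<le> (\<integral>\<^sup>+z. ?h z + ?h (- z) \<partial>lborel)"
  proof (intro nn_integral_mono)
    fix z :: real
    show "ennreal (indicator {z. \<bar>z\<bar> < 1} z * \<bar>z\<bar> powr (- s)) \<le> ?h z + ?h (- z)"
    proof (cases "0 \<le> z")
      case True
      then show ?thesis by (auto simp: indicator_def)
    next
      case False
      then show ?thesis by (auto simp: indicator_def)
    qed
  qed
  also have "\<dots> = (\<integral>\<^sup>+z. ?h z \<partial>lborel) + (\<integral>\<^sup>+z. ?h (- z) \<partial>lborel)"
    by (rule nn_integral_add) auto
  also have "(\<integral>\<^sup>+z. ?h (- z) \<partial>lborel) = (\<integral>\<^sup>+z. ?h z \<partial>lborel)"
    by (rule reflect_nn) auto
  also have "(\<integral>\<^sup>+z. ?h z \<partial>lborel) + (\<integral>\<^sup>+z. ?h z \<partial>lborel) < \<infinity>"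
    unfolding near_half[OF s] by (simp add: ennreal_plus[symmetric] del: ennreal_plus)
  finally show ?thesis .
qed

lemma tail_fin:
  assumes s: "0 < s" and r: "0 < r"
  shows "(\<integral>\<^sup>+z. ennreal (indicator {z. r \<le> \<bar>z\<bar>} z * \<bar>z\<bar> powr (- 1 - s)) \<partial>lborel) < \<infinity>"
proof -
  let ?h = "\<lambda>z::real. ennreal (indicator {r..} z * z powr (- 1 - s))"
  have "(\<integral>\<^sup>+z. ennreal (indicator {z. r \<le> \<bar>z\<bar>} z * \<bar>z\<bar> powr (- 1 - s)) \<partial>lborel)
      \<le> (\<integral>\<^sup>+z. ?h z + ?h (- z) \<partial>lborel)"
  proof (intro nn_integral_mono)
    fix z :: real
    show "ennreal (indicator {z. r \<le> \<bar>z\<bar>} z * \<bar>z\<bar> powr (- 1 - s)) \<le> ?h z + ?h (- z)"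
    proof (cases "0 \<le> z")
      case True
      then show ?thesis by (auto simp: indicator_def)
    next
      case False
      then show ?thesis using r by (auto simp: indicator_def)
    qed
  qed
  also have "\<dots> = (\<integral>\<^sup>+z. ?h z \<partial>lborel) + (\<integral>\<^sup>+z. ?h (- z) \<partial>lborel)"
    by (rule nn_integral_add) auto
  also have "(\<integral>\<^sup>+z. ?h (- z) \<partial>lborel) = (\<integral>\<^sup>+z. ?h z \<partial>lborel)"
    by (rule reflect_nn) auto
  also have "(\<integral>\<^sup>+z. ?h z \<partial>lborel) + (\<integral>\<^sup>+z. ?h z \<partial>lborel) < \<infinity>"
    unfolding tail_half[OF s r] by (simp add: ennreal_plus[symmetric] del: ennreal_plus)
  finally show ?thesis .
qed

lemma sum_list_01_bounds:
  assumes "\<And>c. 0 \<le> f c \<and> f c \<le> (1::real)"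
  shows "0 \<le> (\<Sum>c\<leftarrow>L. f c) \<and> (\<Sum>c\<leftarrow>L. f c) \<le> real (length L)"
proof (induction L)
  case Nil then show ?case by simp
next
  case (Cons c L)
  have "0 \<le> f c" "f c \<le> 1" using assms[of c] by auto
  then show ?case using Cons by simp
qed

lemma sum_list_div_lin:
  assumes P: "P \<noteq> 0"
  shows "(\<Sum>c\<leftarrow>L. (w - c) / P) = (real (length L) * w - (\<Sum>c\<leftarrow>L. c)) / P"
  by (induction L) (use P in \<open>auto simp: field_simps\<close>)

lemma sum_list_abs_le: "\<bar>\<Sum>c\<leftarrow>L. (f c :: real)\<bar> \<le> (\<Sum>c\<leftarrow>L. \<bar>f c\<bar>)"
  by (induction L) (auto intro: order.trans[OF abs_triangle_ineq])

lemma u_repr: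
  assumes T: "0 < T" and len: "length L = T"
  shows "u_conf T L w = (\<Sum>c\<leftarrow>L. c) / real T + (\<Sum>c\<leftarrow>L. (w - c) / real T - real_of_int (fl (real T) c w))"
proof -
  have P: "real T \<noteq> 0" using T by simp
  have "(\<Sum>c\<leftarrow>L. (w - c) / real T - real_of_int (fl (real T) c w))
      = (\<Sum>c\<leftarrow>L. (w - c) / real T) - (\<Sum>c\<leftarrow>L. real_of_int (fl (real T) c w))"
    by (rule sum_list_subtractf)
  also have "(\<Sum>c\<leftarrow>L. (w - c) / real T) = (real T * w - (\<Sum>c\<leftarrow>L. c)) / real T"
    using sum_list_div_lin[OF P, of w L] len by simp
  also have "\<dots> = w - (\<Sum>c\<leftarrow>L. c) / real T" using P by (simp add: field_simps)
  finally show ?thesis unfolding u_conf_fl by simp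
qed

lemma u_diff_bound:
  assumes T: "0 < T" and len: "length L = T"
  shows "\<bar>u_conf T L x - u_conf T L y\<bar> \<le> real T"
proof -
  have Pp: "0 < real T" using T by simp
  have fr: "0 \<le> (w - c) / real T - real_of_int (fl (real T) c w) \<and> (w - c) / real T - real_of_int (fl (real T) c w) \<le> 1" for w c
  proof -
    have "real_of_int \<lfloor>(w - c) / real T\<rfloor> \<le> (w - c) / real T" by (rule of_int_floor_le)
    moreover have "(w - c) / real T \<le> real_of_int \<lfloor>(w - c) / real T\<rfloor> + 1" by (rule real_of_int_floor_add_one_ge)
    ultimately show ?thesis unfolding fl_def by linarith
  qed
  have bx: "0 \<le> (\<Sum>c\<leftarrow>L. (x - c) / real T - real_of_int (fl (real T) c x)) \<and> (\<Sum>c\<leftarrow>L. (x - c) / real T - real_of_int (fl (real T) c x)) \<le> real T"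
    using sum_list_01_bounds[of "\<lambda>c. (x - c) / real T - real_of_int (fl (real T) c x)" L] fr len by auto
  have by': "0 \<le> (\<Sum>c\<leftarrow>L. (y - c) / real T - real_of_int (fl (real T) c y)) \<and> (\<Sum>c\<leftarrow>L. (y - c) / real T - real_of_int (fl (real T) c y)) \<le> real T"
    using sum_list_01_bounds[of "\<lambda>c. (y - c) / real T - real_of_int (fl (real T) c y)" L] fr len by auto
  show ?thesis unfolding u_repr[OF T len, of x] u_repr[OF T len, of y] using bx by' by linarith
qed

lemma win_translate: "x + z \<in> Win P c w \<longleftrightarrow> x \<in> Win P (c - z) w"
  unfolding Win_def by (auto simp: algebra_simps)

lemma fl_jump_int:
  assumes P: "1 \<le> P" and z: "\<bar>z\<bar> < 1"
  shows "(\<integral>\<^sup>+x. indicator {0..P} x * ennreal \<bar>real_of_int (fl P c (x + z)) - real_of_int (fl P c x)\<bar> \<partial>lborel)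
     \<le> ennreal (3 * \<bar>z\<bar>)"
proof (cases "0 \<le> z")
  case True
  have eq: "\<bar>real_of_int (fl P c (x + z)) - real_of_int (fl P c x)\<bar> = indicator (Win P (c - z) z) x" for x
  proof -
    have "real_of_int (fl P c (x + z) - fl P c (x + z - z)) = indicator (Win P c z) (x + z)"
      by (rule fl_diff) (use P z True in auto)
    then show ?thesis using win_translate[of x z P c z] by (simp add: indicator_def)
  qed
  have "(\<integral>\<^sup>+x. indicator {0..P} x * ennreal \<bar>real_of_int (fl P c (x + z)) - real_of_int (fl P c x)\<bar> \<partial>lborel)
      = (\<integral>\<^sup>+x. indicator ({0..P} \<inter> Win P (c - z) z) x \<partial>lborel)"
    unfolding eq by (intro nn_integral_cong) (auto simp: indicator_def)
  also have "\<dots> = emeasure lborel ({0..P} \<inter> Win P (c - z) z)" by simp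
  also have "\<dots> \<le> ennreal (3 * z)" by (rule win_measure) (use P z True in auto)
  finally show ?thesis using True by simp
next
  case False
  have eq: "\<bar>real_of_int (fl P c (x + z)) - real_of_int (fl P c x)\<bar> = indicator (Win P c (- z)) x" for x
  proof -
    have "real_of_int (fl P c x - fl P c (x - (- z))) = indicator (Win P c (- z)) x"
      by (rule fl_diff) (use P z False in auto)
    then show ?thesis by (simp add: abs_minus_commute)
  qed
  have "(\<integral>\<^sup>+x. indicator {0..P} x * ennreal \<bar>real_of_int (fl P c (x + z)) - real_of_int (fl P c x)\<bar> \<partial>lborel)
      = (\<integral>\<^sup>+x. indicator ({0..P} \<inter> Win P c (- z)) x \<partial>lborel)"
    unfolding eq by (intro nn_integral_cong) (auto simp: indicator_def)
  also have "\<dots> = emeasure lborel ({0..P} \<inter> Win P c (- z))" by simp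
  also have "\<dots> \<le> ennreal (3 * (- z))" by (rule win_measure) (use P z False in auto)
  finally show ?thesis using False by simp
qed

lemma fl_jump_sum_int:
  assumes P: "1 \<le> P" and z: "\<bar>z\<bar> < 1"
  shows "(\<integral>\<^sup>+x. indicator {0..P} x * ennreal (\<Sum>c\<leftarrow>L. \<bar>real_of_int (fl P c (x + z)) - real_of_int (fl P c x)\<bar>) \<partial>lborel)
     \<le> ennreal (3 * \<bar>z\<bar> * real (length L))"
proof (induction L)
  case Nil then show ?case by simp
next
  case (Cons c L)
  let ?D = "\<lambda>c x. \<bar>real_of_int (fl P c (x + z)) - real_of_int (fl P c x)\<bar>"
  have "(\<integral>\<^sup>+x. indicator {0..P} x * ennreal (\<Sum>c\<leftarrow>c # L. ?D c x) \<partial>lborel)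
      = (\<integral>\<^sup>+x. indicator {0..P} x * ennreal (?D c x) + indicator {0..P} x * ennreal (\<Sum>c\<leftarrow>L. ?D c x) \<partial>lborel)"
  proof (intro nn_integral_cong)
    fix x
    have "0 \<le> (\<Sum>c\<leftarrow>L. ?D c x)" by (induction L) auto
    then show "indicator {0..P} x * ennreal (\<Sum>c\<leftarrow>c # L. ?D c x)
        = indicator {0..P} x * ennreal (?D c x) + indicator {0..P} x * ennreal (\<Sum>c\<leftarrow>L. ?D c x)"
      by (simp only: list.map sum_list.Cons, subst ennreal_plus) (auto simp: distrib_left)
  qed
  also have "\<dots> = (\<integral>\<^sup>+x. indicator {0..P} x * ennreal (?D c x) \<partial>lborel)
      + (\<integral>\<^sup>+x. indicator {0..P} x * ennreal (\<Sum>c\<leftarrow>L. ?D c x) \<partial>lborel)"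
    by (rule nn_integral_add) measurable
  also have "\<dots> \<le> ennreal (3 * \<bar>z\<bar>) + ennreal (3 * \<bar>z\<bar> * real (length L))"
    by (intro add_mono fl_jump_int[OF P z] Cons.IH)
  also have "\<dots> = ennreal (3 * \<bar>z\<bar> * real (length (c # L)))"
    by (simp add: ennreal_plus[symmetric] algebra_simps del: ennreal_plus)
  finally show ?case .
qed

lemma En_fin:
  assumes s: "0 < s" "s < 1" and T: "0 < T" and len: "length L = T"
  shows "En s (real T) (u_conf T L) < \<infinity>"
proof -
  let ?P = "real T"
  let ?u = "u_conf T L"
  have P1: "1 \<le> ?P" using T by simp
  define k where "k z = \<bar>z\<bar> powr (- 1 - s)" for z :: real
  define S where "S x z = (\<Sum>c\<leftarrow>L. \<bar>real_of_int (fl ?P c (x + z)) - real_of_int (fl ?P c x)\<bar>)" for x z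
  define bnd where "bnd x z = (if \<bar>z\<bar> < 1 then (\<bar>z\<bar> + S x z) * k z else ?P * k z)" for x z
  define \<beta> where "\<beta> z = indicator {z. \<bar>z\<bar> < 1} z * (4 * ?P * \<bar>z\<bar> powr (- s)) + indicator {z. 1 \<le> \<bar>z\<bar>} z * (?P * ?P * k z)" for z
  have k_nn: "0 \<le> k z" for z unfolding k_def by simp
  have S_nn: "0 \<le> S x z" for x z unfolding S_def by (induction L) auto
  have bnd_nn: "0 \<le> bnd x z" for x z unfolding bnd_def using k_nn S_nn by simp
  have [measurable]: "(\<lambda>(x, z). bnd x z) \<in> borel_measurable (lborel \<Otimes>\<^sub>M lborel)"
    unfolding bnd_def S_def k_def by measurable
  have [measurable]: "bnd x \<in> borel_measurable borel" for x
    unfolding bnd_def S_def k_def by measurable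
  have pt: "ennreal (\<bar>?u x - ?u (z + x)\<bar> / \<bar>x - (z + x)\<bar> powr (1 + s)) \<le> ennreal (bnd x z)" for x z
  proof (cases "z = 0")
    case True then show ?thesis by simp
  next
    case False
    have kz: "1 / \<bar>z\<bar> powr (1 + s) = k z"
      unfolding k_def using powr_minus_divide[of "\<bar>z\<bar>" "1 + s"] by simp
    have "\<bar>?u x - ?u (z + x)\<bar> \<le> (if \<bar>z\<bar> < 1 then \<bar>z\<bar> + S x z else ?P)"
    proof (cases "\<bar>z\<bar> < 1")
      case True
      have "?u x - ?u (z + x) = - z + (\<Sum>c\<leftarrow>L. real_of_int (fl ?P c (x + z)) - real_of_int (fl ?P c x))"
        unfolding u_conf_fl sum_list_subtractf by (simp add: add.commute)
      then have "\<bar>?u x - ?u (z + x)\<bar> \<le> \<bar>z\<bar> + \<bar>\<Sum>c\<leftarrow>L. real_of_int (fl ?P c (x + z)) - real_of_int (fl ?P c x)\<bar>"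
        by simp
      also have "\<dots> \<le> \<bar>z\<bar> + S x z" unfolding S_def using sum_list_abs_le by simp
      finally show ?thesis using True by simp
    next
      case False
      then show ?thesis using u_diff_bound[OF T len, of x "z + x"] by simp
    qed
    then have "\<bar>?u x - ?u (z + x)\<bar> * k z \<le> bnd x z"
      unfolding bnd_def using k_nn[of z] by (auto intro: mult_right_mono)
    moreover have "\<bar>?u x - ?u (z + x)\<bar> / \<bar>x - (z + x)\<bar> powr (1 + s) = \<bar>?u x - ?u (z + x)\<bar> * k z"
      by (simp add: kz[symmetric])
    ultimately show ?thesis by (simp add: ennreal_leI)
  qed
  have inner: "(\<integral>\<^sup>+y. ennreal (\<bar>?u x - ?u y\<bar> / \<bar>x - y\<bar> powr (1 + s)) \<partial>lborel) \<le> (\<integral>\<^sup>+z. ennreal (bnd x z) \<partial>lborel)" for x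
  proof -
    have "(\<integral>\<^sup>+y. ennreal (\<bar>?u x - ?u y\<bar> / \<bar>x - y\<bar> powr (1 + s)) \<partial>lborel)
        = (\<integral>\<^sup>+z. ennreal (\<bar>?u x - ?u (z + x)\<bar> / \<bar>x - (z + x)\<bar> powr (1 + s)) \<partial>lborel)"
      by (rule trans_nn) measurable
    also have "\<dots> \<le> (\<integral>\<^sup>+z. ennreal (bnd x z) \<partial>lborel)" by (intro nn_integral_mono pt)
    finally show ?thesis .
  qed
  have zb: "(\<integral>\<^sup>+x. indicator {0..?P} x * ennreal (bnd x z) \<partial>lborel) \<le> ennreal (\<beta> z)" for z
  proof (cases "\<bar>z\<bar> < 1")
    case True
    have "(\<integral>\<^sup>+x. indicator {0..?P} x * ennreal (bnd x z) \<partial>lborel)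
        = (\<integral>\<^sup>+x. ennreal (k z) * (ennreal \<bar>z\<bar> * indicator {0..?P} x + indicator {0..?P} x * ennreal (S x z)) \<partial>lborel)"
    proof (intro nn_integral_cong)
      fix x
      have b: "bnd x z = \<bar>z\<bar> * k z + k z * S x z" unfolding bnd_def using True by (simp add: algebra_simps)
      have e1: "ennreal (\<bar>z\<bar> * k z + k z * S x z) = ennreal (\<bar>z\<bar> * k z) + ennreal (k z * S x z)"
        by (rule ennreal_plus) (use k_nn[of z] S_nn[of x z] in auto)
      have e2: "ennreal (\<bar>z\<bar> * k z) = ennreal \<bar>z\<bar> * ennreal (k z)"
        by (rule ennreal_mult) (use k_nn[of z] in auto)
      have e3: "ennreal (k z * S x z) = ennreal (k z) * ennreal (S x z)"
        by (rule ennreal_mult) (use k_nn[of z] S_nn[of x z] in auto)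
      show "indicator {0..?P} x * ennreal (bnd x z) = ennreal (k z) * (ennreal \<bar>z\<bar> * indicator {0..?P} x + indicator {0..?P} x * ennreal (S x z))"
        unfolding b e1 e2 e3 by (simp add: distrib_left distrib_right mult_ac)
    qed
    also have "\<dots> = ennreal (k z) * (\<integral>\<^sup>+x. ennreal \<bar>z\<bar> * indicator {0..?P} x + indicator {0..?P} x * ennreal (S x z) \<partial>lborel)"
      by (rule nn_integral_cmult) (unfold S_def, measurable)
    also have "(\<integral>\<^sup>+x. ennreal \<bar>z\<bar> * indicator {0..?P} x + indicator {0..?P} x * ennreal (S x z) \<partial>lborel)
        = (\<integral>\<^sup>+x. ennreal \<bar>z\<bar> * indicator {0..?P} x \<partial>lborel) + (\<integral>\<^sup>+x. indicator {0..?P} x * ennreal (S x z) \<partial>lborel)"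
      by (rule nn_integral_add) (unfold S_def, measurable)
    also have "(\<integral>\<^sup>+x. ennreal \<bar>z\<bar> * indicator {0..?P} x \<partial>lborel) = ennreal \<bar>z\<bar> * ennreal ?P"
      by (subst nn_integral_cmult_indicator) auto
    finally have A: "(\<integral>\<^sup>+x. indicator {0..?P} x * ennreal (bnd x z) \<partial>lborel)
        = ennreal (k z) * (ennreal \<bar>z\<bar> * ennreal ?P + (\<integral>\<^sup>+x. indicator {0..?P} x * ennreal (S x z) \<partial>lborel))" .
    have C: "(\<integral>\<^sup>+x. indicator {0..?P} x * ennreal (S x z) \<partial>lborel) \<le> ennreal (3 * \<bar>z\<bar> * real (length L))"
      unfolding S_def by (rule fl_jump_sum_int[OF P1 True])
    have "(\<integral>\<^sup>+x. indicator {0..?P} x * ennreal (bnd x z) \<partial>lborel)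
        \<le> ennreal (k z) * (ennreal \<bar>z\<bar> * ennreal ?P + ennreal (3 * \<bar>z\<bar> * real (length L)))"
      unfolding A by (intro mult_left_mono add_left_mono C) auto
    also have "\<dots> = ennreal (k z * (\<bar>z\<bar> * ?P + 3 * \<bar>z\<bar> * real (length L)))"
      using k_nn[of z] by (simp add: ennreal_mult[symmetric] ennreal_plus[symmetric] del: ennreal_plus)
    also have "\<dots> = ennreal (4 * ?P * (\<bar>z\<bar> * k z))"
      using len by (simp add: algebra_simps)
    also have "\<bar>z\<bar> * k z = \<bar>z\<bar> powr (- s)"
      unfolding k_def using powr_mult_base[of "\<bar>z\<bar>" "- 1 - s"] by simp
    also have "ennreal (4 * ?P * \<bar>z\<bar> powr (- s)) = ennreal (\<beta> z)"
      unfolding \<beta>_def using True by simp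
    finally show ?thesis .
  next
    case False
    have "(\<integral>\<^sup>+x. indicator {0..?P} x * ennreal (bnd x z) \<partial>lborel) = (\<integral>\<^sup>+x. ennreal (?P * k z) * indicator {0..?P} x \<partial>lborel)"
      unfolding bnd_def using False by (intro nn_integral_cong) (simp add: mult.commute)
    also have "\<dots> = ennreal (?P * k z) * ennreal ?P"
      by (subst nn_integral_cmult_indicator) auto
    also have "\<dots> = ennreal (\<beta> z)"
      unfolding \<beta>_def using False k_nn[of z] by (simp add: ennreal_mult''[symmetric] algebra_simps)
    finally show ?thesis by simp
  qed
  have "En s ?P ?u \<le> (\<integral>\<^sup>+x. (\<integral>\<^sup>+z. indicator {0..?P} x * ennreal (bnd x z) \<partial>lborel) \<partial>lborel)"
    unfolding En_def
  proof (intro nn_integral_mono)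
    fix x
    have "indicator {0..?P} x * (\<integral>\<^sup>+y. ennreal (\<bar>?u x - ?u y\<bar> / \<bar>x - y\<bar> powr (1 + s)) \<partial>lborel)
        \<le> indicator {0..?P} x * (\<integral>\<^sup>+z. ennreal (bnd x z) \<partial>lborel)"
      by (intro mult_left_mono inner) auto
    also have "\<dots> = (\<integral>\<^sup>+z. indicator {0..?P} x * ennreal (bnd x z) \<partial>lborel)"
      by (rule nn_integral_cmult[symmetric]) measurable
    finally show "indicator {0..?P} x * (\<integral>\<^sup>+y. ennreal (\<bar>?u x - ?u y\<bar> / \<bar>x - y\<bar> powr (1 + s)) \<partial>lborel)
        \<le> (\<integral>\<^sup>+z. indicator {0..?P} x * ennreal (bnd x z) \<partial>lborel)" .
  qed
  also have "\<dots> = (\<integral>\<^sup>+z. (\<integral>\<^sup>+x. indicator {0..?P} x * ennreal (bnd x z) \<partial>lborel) \<partial>lborel)"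
    by (rule lborel_pair.Fubini'[symmetric]) measurable
  also have "\<dots> \<le> (\<integral>\<^sup>+z. ennreal (\<beta> z) \<partial>lborel)"
    by (intro nn_integral_mono zb)
  also have "(\<integral>\<^sup>+z. ennreal (\<beta> z) \<partial>lborel)
      = (\<integral>\<^sup>+z. ennreal (4 * ?P) * ennreal (indicator {z. \<bar>z\<bar> < 1} z * \<bar>z\<bar> powr (- s))
              + ennreal (?P * ?P) * ennreal (indicator {z. 1 \<le> \<bar>z\<bar>} z * \<bar>z\<bar> powr (- 1 - s)) \<partial>lborel)"
    unfolding \<beta>_def k_def
    by (intro nn_integral_cong)
       (simp add: ennreal_mult''[symmetric] ennreal_plus[symmetric] algebra_simps del: ennreal_plus)
  also have "\<dots> = ennreal (4 * ?P) * (\<integral>\<^sup>+z. ennreal (indicator {z. \<bar>z\<bar> < 1} z * \<bar>z\<bar> powr (- s)) \<partial>lborel)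
      + ennreal (?P * ?P) * (\<integral>\<^sup>+z. ennreal (indicator {z. 1 \<le> \<bar>z\<bar>} z * \<bar>z\<bar> powr (- 1 - s)) \<partial>lborel)"
    by (subst nn_integral_add) (auto simp: nn_integral_cmult)
  also have "\<dots> < \<infinity>"
    using near_fin[OF s] tail_fin[OF s(1), of 1]
    by (simp add: ennreal_mult_less_top)
  finally show ?thesis .
qed

lemma win_sum_int:
  assumes P: "0 < P" and w: "0 \<le> w" "w \<le> P"
  shows "(\<integral>\<^sup>+x. indicator {0..P} x * ennreal (\<Sum>c\<leftarrow>L. indicator (Win P c w) x) \<partial>lborel)
     \<le> ennreal (3 * w * real (length L))"
proof (induction L)
  case Nil then show ?case by simp
next
  case (Cons c L)
  have "(\<integral>\<^sup>+x. indicator {0..P} x * ennreal (\<Sum>c\<leftarrow>c # L. indicator (Win P c w) x) \<partial>lborel)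
      = (\<integral>\<^sup>+x. indicator ({0..P} \<inter> Win P c w) x + indicator {0..P} x * ennreal (\<Sum>c\<leftarrow>L. indicator (Win P c w) x) \<partial>lborel)"
  proof (intro nn_integral_cong)
    fix x
    have "0 \<le> (\<Sum>c\<leftarrow>L. indicator (Win P c w) x :: real)" by (rule sum_ind_nonneg)
    then show "indicator {0..P} x * ennreal (\<Sum>c\<leftarrow>c # L. indicator (Win P c w) x)
        = indicator ({0..P} \<inter> Win P c w) x + indicator {0..P} x * ennreal (\<Sum>c\<leftarrow>L. indicator (Win P c w) x)"
      by (simp only: list.map sum_list.Cons, subst ennreal_plus) (auto simp: distrib_left indicator_def)
  qed
  also have "\<dots> = (\<integral>\<^sup>+x. indicator ({0..P} \<inter> Win P c w) x \<partial>lborel)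
      + (\<integral>\<^sup>+x. indicator {0..P} x * ennreal (\<Sum>c\<leftarrow>L. indicator (Win P c w) x) \<partial>lborel)"
    by (rule nn_integral_add) measurable
  also have "\<dots> \<le> ennreal (3 * w) + ennreal (3 * w * real (length L))"
    by (intro add_mono Cons.IH) (simp add: win_measure[OF P w])
  also have "\<dots> = ennreal (3 * w * real (length (c # L)))"
    using w by (simp add: ennreal_plus[symmetric] algebra_simps del: ennreal_plus)
  finally show ?case .
qed

lemma not_int_dist:
  assumes "\<forall>j::int. w \<noteq> real_of_int j"
  shows "\<exists>\<delta>>0. \<forall>j::int. \<delta> \<le> \<bar>w - real_of_int j\<bar>"
proof -
  define f where "f = \<lfloor>w\<rfloor>"
  have f1: "real_of_int f < w" using assms of_int_floor_le[of w] unfolding f_def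
    by (metis order_le_less)
  have f2: "w < real_of_int f + 1" unfolding f_def by (rule real_of_int_floor_add_one_gt)
  define \<delta> where "\<delta> = min (w - real_of_int f) (real_of_int f + 1 - w)"
  have "\<delta> > 0" unfolding \<delta>_def using f1 f2 by simp
  moreover have "\<delta> \<le> \<bar>w - real_of_int j\<bar>" for j :: int
  proof (cases "j \<le> f")
    case True
    then have "real_of_int j \<le> real_of_int f" by simp
    then show ?thesis unfolding \<delta>_def by linarith
  next
    case False
    then have "real_of_int f + 1 \<le> real_of_int j" by simp
    then show ?thesis unfolding \<delta>_def by linarith
  qed
  ultimately show ?thesis by blast
qed

context S0
begin

lemma Zs_mono:
  assumes "t \<le> t'" shows "Zs t \<subseteq> Zs t'"
proof
  fix z assume "z \<in> Zs t"
  then obtain c j where c: "c \<in> set xs" "c \<noteq> a" and j: "\<bar>z - (c - a + real_of_int j * P)\<bar> < t \<or> \<bar>z + (c - a + real_of_int j * P)\<bar> < t"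
    unfolding Zs_def by blast
  then have "\<bar>z - (c - a + real_of_int j * P)\<bar> < t' \<or> \<bar>z + (c - a + real_of_int j * P)\<bar> < t'"
    using assms by linarith
  then show "z \<in> Zs t'" unfolding Zs_def using c by blast
qed

lemma Zs_far:
  assumes "t \<le> g / 2" "z \<in> Zs t"
  shows "g / 2 \<le> \<bar>z\<bar>"
proof -
  obtain c j where c: "c \<in> set xs" "c \<noteq> a" and j: "\<bar>z - (c - a + real_of_int j * P)\<bar> < t \<or> \<bar>z + (c - a + real_of_int j * P)\<bar> < t"
    using assms(2) unfolding Zs_def by blast
  have "g < \<bar>c + real_of_int j * P - a\<bar>" using gap[OF c(1)] c(2) by blast
  then show ?thesis using j assms(1) by linarith
qed

definition "phi t = (\<integral>\<^sup>+z. ennreal (indicator (Zs t) z / \<bar>z\<bar> powr (1 + s)) \<partial>lborel)"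

definition "Dset = {z. \<exists>c\<in>set xs. c \<noteq> a \<and> (\<exists>j::int. z = c - a + j * P \<or> z = - (c - a + j * P))}"

lemma Dset_countable: "countable Dset"
proof -
  have "Dset \<subseteq> (\<Union>c\<in>set xs. \<Union>j\<in>(UNIV::int set). {c - a + j * P, - (c - a + j * P)})"
    unfolding Dset_def by blast
  moreover have "countable (\<Union>c\<in>set xs. \<Union>j\<in>(UNIV::int set). {c - a + j * P, - (c - a + j * P)})"
    using countable_finite[OF finite_set[of xs]] by (intro countable_UN) auto
  ultimately show ?thesis by (rule countable_subset)
qed

lemma escape:
  assumes "z \<notin> Dset"
  shows "\<exists>\<delta>>0. z \<notin> Zs \<delta>"
proof -
  have ex: "\<exists>\<delta>>0. \<forall>j::int. \<delta> \<le> \<bar>z - (c - a + j * P)\<bar> \<and> \<delta> \<le> \<bar>z + (c - a + j * P)\<bar>"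
    if c: "c \<in> set xs - {a}" for c
  proof -
    have w1: "\<forall>j::int. (z - (c - a)) / P \<noteq> real_of_int j"
    proof (intro allI notI)
      fix j :: int assume "(z - (c - a)) / P = real_of_int j"
      then have "z = c - a + j * P" using P_pos by (simp add: field_simps)
      then show False using assms c unfolding Dset_def by blast
    qed
    have w2: "\<forall>j::int. (- z - (c - a)) / P \<noteq> real_of_int j"
    proof (intro allI notI)
      fix j :: int assume "(- z - (c - a)) / P = real_of_int j"
      then have "z = - (c - a + j * P)" using P_pos by (simp add: field_simps)
      then show False using assms c unfolding Dset_def by blast
    qed
    obtain d1 where d1: "d1 > 0" "\<forall>j::int. d1 \<le> \<bar>(z - (c - a)) / P - j\<bar>" using not_int_dist[OF w1] by blast
    obtain d2 where d2: "d2 > 0" "\<forall>j::int. d2 \<le> \<bar>(- z - (c - a)) / P - j\<bar>" using not_int_dist[OF w2] by blast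
    define \<delta> where "\<delta> = P * min d1 d2"
    have "\<delta> > 0" unfolding \<delta>_def using d1 d2 P_pos by simp
    moreover have "\<delta> \<le> \<bar>z - (c - a + j * P)\<bar> \<and> \<delta> \<le> \<bar>z + (c - a + j * P)\<bar>" for j :: int
    proof -
      have q1: "P * ((z - (c - a)) / P - j) = z - (c - a + j * P)" using P_pos by (simp add: field_simps)
      have q2: "P * ((- z - (c - a)) / P - j) = - (z + (c - a + j * P))" using P_pos by (simp add: field_simps)
      have e1: "\<bar>z - (c - a + j * P)\<bar> = P * \<bar>(z - (c - a)) / P - j\<bar>"
        using P_pos by (simp add: q1[symmetric] abs_mult)
      have e2: "\<bar>z + (c - a + j * P)\<bar> = P * \<bar>(- z - (c - a)) / P - j\<bar>"
      proof -
        have "\<bar>z + (c - a + j * P)\<bar> = \<bar>- (z + (c - a + j * P))\<bar>" by simp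
        also have "\<dots> = P * \<bar>(- z - (c - a)) / P - j\<bar>" using P_pos by (simp only: q2[symmetric] abs_mult; simp)
        finally show ?thesis .
      qed
      have "min d1 d2 \<le> \<bar>(z - (c - a)) / P - j\<bar>" using d1 by (meson min.coboundedI1)
      moreover have "min d1 d2 \<le> \<bar>(- z - (c - a)) / P - j\<bar>" using d2 by (meson min.coboundedI2)
      ultimately show ?thesis unfolding e1 e2 \<delta>_def using P_pos
        by (simp add: mult_left_mono)
    qed
    ultimately show ?thesis by blast
  qed
  then obtain df where df: "\<And>c. c \<in> set xs - {a} \<Longrightarrow> df c > 0 \<and> (\<forall>j::int. df c \<le> \<bar>z - (c - a + j * P)\<bar> \<and> df c \<le> \<bar>z + (c - a + j * P)\<bar>)"
    by metis
  define \<delta> where "\<delta> = Min (insert 1 (df ` (set xs - {a})))"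
  have fin: "finite (insert 1 (df ` (set xs - {a})))" by simp
  have "\<delta> > 0" unfolding \<delta>_def using df fin by (subst Min_gr_iff) auto
  moreover have "z \<notin> Zs \<delta>"
  proof
    assume "z \<in> Zs \<delta>"
    then obtain c j where c: "c \<in> set xs" "c \<noteq> a" and j: "\<bar>z - (c - a + real_of_int j * P)\<bar> < \<delta> \<or> \<bar>z + (c - a + real_of_int j * P)\<bar> < \<delta>"
      unfolding Zs_def by blast
    have "\<delta> \<le> df c" unfolding \<delta>_def using fin c by (intro Min_le) auto
    moreover have "df c \<le> \<bar>z - (c - a + real_of_int j * P)\<bar>" "df c \<le> \<bar>z + (c - a + real_of_int j * P)\<bar>"
      using df[of c] c by auto
    ultimately show False using j by linarith
  qed
  ultimately show ?thesis by blast
qed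

lemma phi_small:
  fixes \<epsilon> t1 :: real
  assumes eps: "0 < \<epsilon>" and t1: "0 < t1"
  shows "\<exists>t. 0 < t \<and> t \<le> g / 4 \<and> t \<le> t1 \<and> phi t < ennreal \<epsilon>"
proof -
  define t0 where "t0 = min (g / 4) t1"
  have t0: "0 < t0" "t0 \<le> g / 4" "t0 \<le> t1" unfolding t0_def using g t1 by auto
  define tn where "tn n = t0 / (real n + 1)" for n :: nat
  have tn_pos: "0 < tn n" for n unfolding tn_def using t0 by simp
  have tn_le0: "tn n \<le> t0" for n unfolding tn_def using t0 by (simp add: field_simps)
  have tn_le: "tn n \<le> g / 4" for n using tn_le0[of n] t0 by linarith
  have tn_dec: "tn (Suc n) \<le> tn n" for n unfolding tn_def using t0 by (simp add: frac_le)
  define f where "f n z = ennreal (indicator (Zs (tn n)) z / \<bar>z\<bar> powr (1 + s))" for n z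
  have f_meas[measurable]: "f n \<in> borel_measurable lborel" for n unfolding f_def by measurable
  have dec: "decseq f"
  proof (rule decseq_SucI, rule le_funI)
    fix n z
    show "f (Suc n) z \<le> f n z"
      unfolding f_def using Zs_mono[OF tn_dec[of n]]
      by (intro ennreal_leI divide_right_mono) (auto simp: indicator_def)
  qed
  have fin: "(\<integral>\<^sup>+ z. f n z \<partial>lborel) < \<infinity>" for n
  proof -
    have "(\<integral>\<^sup>+ z. f n z \<partial>lborel) \<le> (\<integral>\<^sup>+z. ennreal (indicator {z. g / 2 \<le> \<bar>z\<bar>} z * \<bar>z\<bar> powr (- 1 - s)) \<partial>lborel)"
    proof (intro nn_integral_mono)
      fix z
      show "f n z \<le> ennreal (indicator {z. g / 2 \<le> \<bar>z\<bar>} z * \<bar>z\<bar> powr (- 1 - s))"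
      proof (cases "z \<in> Zs (tn n)")
        case True
        have "tn n \<le> g / 2" using tn_le[of n] g by linarith
        then have "g / 2 \<le> \<bar>z\<bar>" using Zs_far[of "tn n" z] True by simp
        moreover have "1 / \<bar>z\<bar> powr (1 + s) = \<bar>z\<bar> powr (- 1 - s)"
          using powr_minus_divide[of "\<bar>z\<bar>" "1 + s"] by simp
        ultimately show ?thesis unfolding f_def using True by simp
      next
        case False
        then show ?thesis unfolding f_def by simp
      qed
    qed
    also have "\<dots> < \<infinity>" by (rule tail_fin) (use s g in auto)
    finally show ?thesis .
  qed
  have INF0: "(\<integral>\<^sup>+ z. (INF n. f n z) \<partial>lborel) = 0"
  proof -
    have "AE z in lborel. z \<notin> Dset"
      using countable_imp_null_set_lborel[OF Dset_countable] by (rule AE_not_in)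
    then have "AE z in lborel. (INF n. f n z) = 0"
    proof eventually_elim
      case (elim z)
      obtain \<delta> where d: "\<delta> > 0" "z \<notin> Zs \<delta>" using escape[OF elim] by blast
      obtain n :: nat where n: "t0 / \<delta> < real n + 1"
        using reals_Archimedean2[of "t0 / \<delta>"] by (metis less_add_one order.strict_trans)
      have "tn n \<le> \<delta>" unfolding tn_def using n d t0 by (simp add: field_simps)
      then have "z \<notin> Zs (tn n)" using Zs_mono d by blast
      then have "f n z = 0" unfolding f_def by simp
      then show ?case by (metis INF_lower UNIV_I antisym zero_le)
    qed
    then show ?thesis by (simp add: nn_integral_0_iff_AE)
  qed
  have "(INF n. integral\<^sup>N lborel (f n)) = 0"
    using nn_integral_monotone_convergence_INF_decseq[OF dec f_meas fin] INF0 by simp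
  then have "(INF n. integral\<^sup>N lborel (f n)) < ennreal \<epsilon>" using eps by simp
  then obtain n where "integral\<^sup>N lborel (f n) < ennreal \<epsilon>" by (auto simp: INF_less_iff)
  then show ?thesis using tn_pos[of n] tn_le[of n] tn_le0[of n] t0 unfolding phi_def f_def by force
qed

end

context S0
begin

lemma len_L0: "length L0 = T - 1" using a_in len by (simp add: length_remove1)

lemma uM_periodic: "uM t (x + P) = uM t x"
  unfolding uM_def by (rule u_conf_periodic) (use len_L0 T_pos in \<open>auto simp: length_insort\<close>)

lemma u_periodic: "u (x + P) = u x"
  by (rule u_conf_periodic) (use len T_pos in auto)

definition "Gi t = (\<integral>\<^sup>+x. indicator {0..P} x * (\<integral>\<^sup>+y. ennreal (g / 2 * indicator {a..<a+t} x * indicator {a + g/2..<a+g} y / \<bar>x - y\<bar> powr (1 + s)) \<partial>lborel) \<partial>lborel)"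

definition "Bi t = (\<integral>\<^sup>+x. indicator {0..P} x * (\<integral>\<^sup>+y. ennreal (2 * indicator (Zs t) (y - x) * (ia t x + Ot t x) / \<bar>x - y\<bar> powr (1 + s)) \<partial>lborel) \<partial>lborel)"

lemma integral_ineq:
  assumes t: "0 < t" "t \<le> g / 4"
  shows "En s P (uP t) + En s P (uM t) + Gi t \<le> En s P u + En s P u + Bi t"
proof -
  have tP: "0 \<le> t" "t \<le> P" using t g_lt_P by auto
  have eM: "En s P (uM t) = (\<integral>\<^sup>+ x. indicator {0..P} x *
      (\<integral>\<^sup>+ y. ennreal (\<bar>uM t (x - t) - uM t (y - t)\<bar> / \<bar>x - y\<bar> powr (1 + s)) \<partial>lborel) \<partial>lborel)"
    by (rule En_shift[symmetric]) (use uM_periodic tP in auto)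
  have eU: "En s P u = (\<integral>\<^sup>+ x. indicator {0..P} x *
      (\<integral>\<^sup>+ y. ennreal (\<bar>u (x - t) - u (y - t)\<bar> / \<bar>x - y\<bar> powr (1 + s)) \<partial>lborel) \<partial>lborel)"
    by (rule En_shift[symmetric]) (use u_periodic tP in auto)
  have nn_bad: "0 \<le> 2 * indicator (Zs t) (y - x) * (ia t x + Ot t x) / \<bar>x - y\<bar> powr (1 + s)" for x y
    using ia_01[of t x] Ot_nonneg[of t x] by auto
  have nn_gain: "0 \<le> g / 2 * indicator {a..<a+t} x * indicator {a + g/2..<a+g} y / \<bar>x - y\<bar> powr (1 + s)" for x y
    using g by auto
  have le: "\<bar>uP t x - uP t y\<bar> / \<bar>x - y\<bar> powr (1 + s) + \<bar>uM t (x - t) - uM t (y - t)\<bar> / \<bar>x - y\<bar> powr (1 + s)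
        + g / 2 * indicator {a..<a+t} x * indicator {a + g/2..<a+g} y / \<bar>x - y\<bar> powr (1 + s)
        \<le> \<bar>u x - u y\<bar> / \<bar>x - y\<bar> powr (1 + s) + \<bar>u (x - t) - u (y - t)\<bar> / \<bar>x - y\<bar> powr (1 + s)
        + 2 * indicator (Zs t) (y - x) * (ia t x + Ot t x) / \<bar>x - y\<bar> powr (1 + s)" for x y
  proof -
    have "(\<bar>uP t x - uP t y\<bar> + \<bar>uM t (x - t) - uM t (y - t)\<bar> + g / 2 * indicator {a..<a+t} x * indicator {a + g/2..<a+g} y) / \<bar>x - y\<bar> powr (1 + s)
        \<le> (\<bar>u x - u y\<bar> + \<bar>u (x - t) - u (y - t)\<bar> + 2 * indicator (Zs t) (y - x) * (ia t x + Ot t x)) / \<bar>x - y\<bar> powr (1 + s)"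
      by (rule divide_right_mono[OF pointwise[OF t]]) simp
    then show ?thesis by (simp only: add_divide_distrib)
  qed
  have main: "(\<integral>\<^sup>+x. indicator {0..P} x * (\<integral>\<^sup>+y. ennreal (\<bar>uP t x - uP t y\<bar> / \<bar>x - y\<bar> powr (1 + s)) \<partial>lborel) \<partial>lborel)
       + (\<integral>\<^sup>+x. indicator {0..P} x * (\<integral>\<^sup>+y. ennreal (\<bar>uM t (x - t) - uM t (y - t)\<bar> / \<bar>x - y\<bar> powr (1 + s)) \<partial>lborel) \<partial>lborel)
       + (\<integral>\<^sup>+x. indicator {0..P} x * (\<integral>\<^sup>+y. ennreal (g / 2 * indicator {a..<a+t} x * indicator {a + g/2..<a+g} y / \<bar>x - y\<bar> powr (1 + s)) \<partial>lborel) \<partial>lborel)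
     \<le> (\<integral>\<^sup>+x. indicator {0..P} x * (\<integral>\<^sup>+y. ennreal (\<bar>u x - u y\<bar> / \<bar>x - y\<bar> powr (1 + s)) \<partial>lborel) \<partial>lborel)
       + (\<integral>\<^sup>+x. indicator {0..P} x * (\<integral>\<^sup>+y. ennreal (\<bar>u (x - t) - u (y - t)\<bar> / \<bar>x - y\<bar> powr (1 + s)) \<partial>lborel) \<partial>lborel)
       + (\<integral>\<^sup>+x. indicator {0..P} x * (\<integral>\<^sup>+y. ennreal (2 * indicator (Zs t) (y - x) * (ia t x + Ot t x) / \<bar>x - y\<bar> powr (1 + s)) \<partial>lborel) \<partial>lborel)"
  proof (rule sum3_mono[of "\<lambda>x y. \<bar>uP t x - uP t y\<bar> / \<bar>x - y\<bar> powr (1 + s)"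
        "\<lambda>x y. \<bar>uM t (x - t) - uM t (y - t)\<bar> / \<bar>x - y\<bar> powr (1 + s)"
        "\<lambda>x y. g / 2 * indicator {a..<a+t} x * indicator {a + g/2..<a+g} y / \<bar>x - y\<bar> powr (1 + s)"
        "\<lambda>x y. \<bar>u x - u y\<bar> / \<bar>x - y\<bar> powr (1 + s)"
        "\<lambda>x y. \<bar>u (x - t) - u (y - t)\<bar> / \<bar>x - y\<bar> powr (1 + s)"
        "\<lambda>x y. 2 * indicator (Zs t) (y - x) * (ia t x + Ot t x) / \<bar>x - y\<bar> powr (1 + s)"
        "{0..P}"])
    show "(\<lambda>(x, y). \<bar>uP t x - uP t y\<bar> / \<bar>x - y\<bar> powr (1 + s)) \<in> borel_measurable (lborel \<Otimes>\<^sub>M lborel)"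
      by measurable
    show "(\<lambda>(x, y). \<bar>uM t (x - t) - uM t (y - t)\<bar> / \<bar>x - y\<bar> powr (1 + s)) \<in> borel_measurable (lborel \<Otimes>\<^sub>M lborel)"
      by measurable
    show "(\<lambda>(x, y). g / 2 * indicator {a..<a+t} x * indicator {a + g/2..<a+g} y / \<bar>x - y\<bar> powr (1 + s)) \<in> borel_measurable (lborel \<Otimes>\<^sub>M lborel)"
      by measurable
    show "(\<lambda>(x, y). \<bar>u x - u y\<bar> / \<bar>x - y\<bar> powr (1 + s)) \<in> borel_measurable (lborel \<Otimes>\<^sub>M lborel)"
      by measurable
    show "(\<lambda>(x, y). \<bar>u (x - t) - u (y - t)\<bar> / \<bar>x - y\<bar> powr (1 + s)) \<in> borel_measurable (lborel \<Otimes>\<^sub>M lborel)"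
      by measurable
    show "(\<lambda>(x, y). 2 * indicator (Zs t) (y - x) * (ia t x + Ot t x) / \<bar>x - y\<bar> powr (1 + s)) \<in> borel_measurable (lborel \<Otimes>\<^sub>M lborel)"
      by measurable
  qed (use le nn_bad nn_gain in simp_all)
  show ?thesis using main[unfolded eM[symmetric] eU[symmetric], folded En_def Gi_def Bi_def] .
qed

lemma Gi_ge:
  assumes t: "0 < t" "t \<le> g / 4" and at: "a + t \<le> P"
  shows "ennreal (g / 2 / g powr (1 + s) * (g / 2) * t) \<le> Gi t"
proof -
  define \<kappa> where "\<kappa> = g / 2 / g powr (1 + s)"
  have \<kappa>_nn: "0 \<le> \<kappa>" unfolding \<kappa>_def using g by simp
  have inner: "ennreal (\<kappa> * (g / 2)) * indicator {a..<a+t} x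
      \<le> indicator {0..P} x * (\<integral>\<^sup>+y. ennreal (g / 2 * indicator {a..<a+t} x * indicator {a + g/2..<a+g} y / \<bar>x - y\<bar> powr (1 + s)) \<partial>lborel)" for x
  proof (cases "x \<in> {a..<a+t}")
    case False then show ?thesis by simp
  next
    case True
    have x0: "x \<in> {0..P}" using True a_rng at by auto
    have em: "emeasure lborel {a + g/2..<a+g} = ennreal (g / 2)"
      using g by (subst emeasure_lborel_Ico) (auto simp: field_simps)
    have a1: "(\<integral>\<^sup>+y. ennreal \<kappa> * indicator {a + g/2..<a+g} y \<partial>lborel) = ennreal \<kappa> * ennreal (g / 2)"
      by (simp add: nn_integral_cmult_indicator em)
    have a2: "ennreal (\<kappa> * (g / 2)) = ennreal \<kappa> * ennreal (g / 2)"
      by (rule ennreal_mult) (use \<kappa>_nn g in auto)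
    have "ennreal (\<kappa> * (g / 2)) = (\<integral>\<^sup>+y. ennreal \<kappa> * indicator {a + g/2..<a+g} y \<partial>lborel)"
      unfolding a1 a2 ..
    also have "\<dots> \<le> (\<integral>\<^sup>+y. ennreal (g / 2 * indicator {a..<a+t} x * indicator {a + g/2..<a+g} y / \<bar>x - y\<bar> powr (1 + s)) \<partial>lborel)"
    proof (intro nn_integral_mono)
      fix y
      show "ennreal \<kappa> * indicator {a + g/2..<a+g} y
          \<le> ennreal (g / 2 * indicator {a..<a+t} x * indicator {a + g/2..<a+g} y / \<bar>x - y\<bar> powr (1 + s))"
      proof (cases "y \<in> {a + g/2..<a+g}")
        case False then show ?thesis by simp
      next
        case yB: True
        have d1: "0 < \<bar>x - y\<bar>" using True yB t by auto
        have d2: "\<bar>x - y\<bar> \<le> g" using True yB t by auto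
        have "\<bar>x - y\<bar> powr (1 + s) \<le> g powr (1 + s)" by (rule powr_mono2) (use d1 d2 s in auto)
        moreover have "0 < \<bar>x - y\<bar> powr (1 + s)" using d1 by simp
        ultimately have "\<kappa> \<le> g / 2 / \<bar>x - y\<bar> powr (1 + s)"
          unfolding \<kappa>_def using g by (intro divide_left_mono) auto
        then show ?thesis using True yB by (simp add: ennreal_leI)
      qed
    qed
    finally show ?thesis using True x0 by simp
  qed
  have em2: "emeasure lborel {a..<a+t} = ennreal t" using t by simp
  have b1: "(\<integral>\<^sup>+x. ennreal (\<kappa> * (g / 2)) * indicator {a..<a+t} x \<partial>lborel) = ennreal (\<kappa> * (g / 2)) * ennreal t"
    by (simp add: nn_integral_cmult_indicator em2)
  have b2: "ennreal (\<kappa> * (g / 2) * t) = ennreal (\<kappa> * (g / 2)) * ennreal t"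
    by (rule ennreal_mult) (use \<kappa>_nn g t in auto)
  have "ennreal (\<kappa> * (g / 2) * t) = (\<integral>\<^sup>+x. ennreal (\<kappa> * (g / 2)) * indicator {a..<a+t} x \<partial>lborel)"
    unfolding b1 b2 ..
  also have "\<dots> \<le> Gi t" unfolding Gi_def by (intro nn_integral_mono inner)
  finally show ?thesis unfolding \<kappa>_def .
qed

lemma Bi_le:
  assumes t: "0 < t" "t \<le> g / 4"
  shows "Bi t \<le> phi t * ennreal (6 * t * (1 + real T))"
proof -
  have tP: "0 \<le> t" "t \<le> P" using t g_lt_P by auto
  define Sx where "Sx x = (\<Sum>c\<leftarrow>a # filter (\<lambda>c. c \<noteq> a) xs. indicator (Win P c t) x :: real)" for x
  have Sx_eq: "ia t x + Ot t x = Sx x" for x unfolding Sx_def ia_def Ot_def by simp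
  have Sx_nn: "0 \<le> Sx x" for x unfolding Sx_def by (rule sum_ind_nonneg)
  have inner: "(\<integral>\<^sup>+y. ennreal (2 * indicator (Zs t) (y - x) * (ia t x + Ot t x) / \<bar>x - y\<bar> powr (1 + s)) \<partial>lborel)
      = ennreal (2 * Sx x) * phi t" for x
  proof -
    have "(\<integral>\<^sup>+y. ennreal (2 * indicator (Zs t) (y - x) * (ia t x + Ot t x) / \<bar>x - y\<bar> powr (1 + s)) \<partial>lborel)
        = (\<integral>\<^sup>+y. ennreal (2 * Sx x) * ennreal (indicator (Zs t) (y - x) / \<bar>x - y\<bar> powr (1 + s)) \<partial>lborel)"
      using Sx_nn[of x] unfolding Sx_eq
      by (intro nn_integral_cong) (simp add: ennreal_mult''[symmetric] algebra_simps)
    also have "\<dots> = ennreal (2 * Sx x) * (\<integral>\<^sup>+y. ennreal (indicator (Zs t) (y - x) / \<bar>x - y\<bar> powr (1 + s)) \<partial>lborel)"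
      by (rule nn_integral_cmult) measurable
    also have "(\<integral>\<^sup>+y. ennreal (indicator (Zs t) (y - x) / \<bar>x - y\<bar> powr (1 + s)) \<partial>lborel)
        = (\<integral>\<^sup>+z. ennreal (indicator (Zs t) (z + x - x) / \<bar>x - (z + x)\<bar> powr (1 + s)) \<partial>lborel)"
      by (rule trans_nn) measurable
    also have "\<dots> = phi t" unfolding phi_def by simp
    finally show ?thesis .
  qed
  have "Bi t = (\<integral>\<^sup>+x. phi t * (ennreal 2 * (indicator {0..P} x * ennreal (Sx x))) \<partial>lborel)"
    unfolding Bi_def inner using Sx_nn
    by (intro nn_integral_cong) (simp add: ennreal_mult'' mult_ac)
  also have "\<dots> = phi t * (ennreal 2 * (\<integral>\<^sup>+x. indicator {0..P} x * ennreal (Sx x) \<partial>lborel))"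
    by (simp add: nn_integral_cmult Sx_def)
  also have "\<dots> \<le> phi t * (ennreal 2 * ennreal (3 * t * (1 + real T)))"
  proof -
    have I1: "(\<integral>\<^sup>+x. indicator {0..P} x * ennreal (Sx x) \<partial>lborel) \<le> ennreal (3 * t * real (length (a # filter (\<lambda>c. c \<noteq> a) xs)))"
      unfolding Sx_def by (rule win_sum_int[OF P_pos tP])
    have "length (filter (\<lambda>c. c \<noteq> a) xs) \<le> T" using len by (metis length_filter_le)
    then have I2: "3 * t * real (length (a # filter (\<lambda>c. c \<noteq> a) xs)) \<le> 3 * t * (1 + real T)"
      using tP by (simp add: mult_left_mono)
    have "(\<integral>\<^sup>+x. indicator {0..P} x * ennreal (Sx x) \<partial>lborel) \<le> ennreal (3 * t * (1 + real T))"
      using I1 ennreal_leI[OF I2] by (rule order_trans)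
    then show ?thesis by (intro mult_left_mono) auto
  qed
  also have "ennreal 2 * ennreal (3 * t * (1 + real T)) = ennreal (6 * t * (1 + real T))"
    by (subst ennreal_mult[symmetric]) (use tP in auto)
  finally show ?thesis .
qed

end

lemma filter_insort_len:
  "length (filter (\<lambda>y. y = a) (insort p L)) = (if p = a then 1 else 0) + length (filter (\<lambda>y. y = a) L)"
  by (induction L) auto

lemma filter_remove1_len:
  "a \<in> set L \<Longrightarrow> length (filter (\<lambda>y. y = a) (remove1 a L)) = length (filter (\<lambda>y. y = a) L) - 1"
  by (induction L) auto

lemma config_insort:
  assumes cfg: "config T xs" and a: "a \<in> set xs" and p: "0 \<le> p" "p < real T"
  shows "config T (insort p (remove1 a xs))"
proof -
  have "length xs = T" "sorted xs" "\<forall>x\<in>set xs. 0 \<le> x \<and> x < real T" using cfg unfolding config_def by auto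
  moreover have "set (remove1 a xs) \<subseteq> set xs" by (rule set_remove1_subset)
  ultimately show ?thesis unfolding config_def using a p
    by (auto simp: length_insort length_remove1 sorted_insort sorted_remove1 set_insort_key)
qed

lemma mult_insort:
  assumes a: "a \<in> set xs" and p: "p \<noteq> a"
  shows "mult (insort p (remove1 a xs)) a = mult xs a - 1"
  unfolding mult_def filter_insort_len filter_remove1_len[OF a] using p by simp

lemma gap_exists:
  assumes cfg: "config T xs" and a: "a \<in> set xs"
  shows "\<exists>g. 0 < g \<and> g \<le> 1 \<and> (\<forall>c k. c \<in> set xs \<longrightarrow> (c \<noteq> a \<or> k \<noteq> 0) \<longrightarrow> g < \<bar>c + real_of_int k * real T - a\<bar>)"
proof -
  let ?P = "real T"
  have rng: "\<And>x. x \<in> set xs \<Longrightarrow> 0 \<le> x \<and> x < ?P" using cfg unfolding config_def by auto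
  have "0 < ?P" using rng[OF a] by linarith
  then have "1 \<le> T" by simp
  then have P1: "1 \<le> ?P" by simp
  define S where "S = (\<lambda>c. min \<bar>c - a\<bar> (?P - \<bar>c - a\<bar>)) ` (set xs - {a})"
  define \<delta> where "\<delta> = Min (insert 1 S)"
  have finS: "finite (insert 1 S)" unfolding S_def by simp
  have Spos: "\<forall>x\<in>S. 0 < x"
  proof
    fix x assume "x \<in> S"
    then obtain c where c: "c \<in> set xs" "c \<noteq> a" "x = min \<bar>c - a\<bar> (?P - \<bar>c - a\<bar>)" unfolding S_def by auto
    have "\<bar>c - a\<bar> < ?P" using rng[OF c(1)] rng[OF a] by linarith
    then show "0 < x" using c by simp
  qed
  have \<delta>pos: "0 < \<delta>" unfolding \<delta>_def using finS Spos by (subst Min_gr_iff) auto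
  have \<delta>1: "\<delta> \<le> 1" unfolding \<delta>_def using finS by (intro Min_le) auto
  have \<delta>S: "\<delta> \<le> min \<bar>c - a\<bar> (?P - \<bar>c - a\<bar>)" if "c \<in> set xs" "c \<noteq> a" for c
    unfolding \<delta>_def using finS that by (intro Min_le) (auto simp: S_def)
  define g where "g = \<delta> / 2"
  have "0 < g" "g \<le> 1" unfolding g_def using \<delta>pos \<delta>1 by auto
  moreover have "g < \<bar>c + real_of_int k * ?P - a\<bar>" if c: "c \<in> set xs" and ck: "c \<noteq> a \<or> k \<noteq> 0" for c k
  proof (cases "k = 0")
    case True
    then have "c \<noteq> a" using ck by simp
    then show ?thesis using \<delta>S[OF c] \<delta>pos True unfolding g_def by auto
  next
    case False
    have "1 \<le> \<bar>real_of_int k\<bar>" using False by linarith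
    then have kP: "?P \<le> \<bar>real_of_int k * ?P\<bar>" using P1 by (simp add: abs_mult)
    have tri: "\<bar>real_of_int k * ?P\<bar> - \<bar>c - a\<bar> \<le> \<bar>c + real_of_int k * ?P - a\<bar>" by linarith
    show ?thesis
    proof (cases "c = a")
      case True
      then show ?thesis using kP tri \<delta>1 \<delta>pos P1 unfolding g_def by simp
    next
      case False
      then show ?thesis using kP tri \<delta>S[OF c False] \<delta>pos unfolding g_def by linarith
    qed
  qed
  ultimately show ?thesis by blast
qed

theorem mainTheorem7:
  fixes s :: real and T :: nat and xs :: "real list" and i :: nat
  assumes "0 < s" and "s < 1"
    and "config T xs"
    and "1 \<le> i" and "i \<le> T"
    and "mult xs (xs ! (i - 1)) > 1"
  shows "\<exists>xs'. config T xs' \<and> mult xs' (xs ! (i - 1)) = mult xs (xs ! (i - 1)) - 1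
              \<and> F1 s T xs > F1 s T xs'"
proof -
  define a where "a = xs ! (i - 1)"
  have lenT: "length xs = T" using assms(3) unfolding config_def by auto
  have a_in: "a \<in> set xs" unfolding a_def using assms(4,5) lenT by (intro nth_mem) auto
  have m2: "2 \<le> mult xs a" using assms(6) unfolding a_def by simp
  obtain g where g: "0 < g" "g \<le> 1"
    and gap: "\<And>c k. c \<in> set xs \<Longrightarrow> c \<noteq> a \<or> k \<noteq> 0 \<Longrightarrow> g < \<bar>c + real_of_int k * real T - a\<bar>"
    using gap_exists[OF assms(3) a_in] by blast
  interpret S0 s T xs a g
    by unfold_locales (use assms(1,2,3) a_in m2 g gap in auto)
  define c0 where "c0 = g / 2 / g powr (1 + s) * (g / 2)"
  have c0: "0 < c0" unfolding c0_def using g by simp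
  define \<epsilon> where "\<epsilon> = c0 / (6 * (1 + real T))"
  have \<epsilon>: "0 < \<epsilon>" unfolding \<epsilon>_def using c0 by simp
  have t1: "0 < (P - a) / 2" using a_rng by simp
  obtain t where t: "0 < t" "t \<le> g / 4" "t \<le> (P - a) / 2" and ph: "phi t < ennreal \<epsilon>"
    using phi_small[OF \<epsilon> t1] by blast
  have "2 * t \<le> P - a" using t(3) by (simp add: field_simps)
  then have at: "a + t < P" using t a_rng by linarith
  have tP: "t < P" using t g_lt_P by linarith
  define xsP where "xsP = insort (a + t) L0"
  define xsM where "xsM = insort (pm t) L0"
  have cP: "config T xsP" unfolding xsP_def by (rule config_insort[OF assms(3) a_in]) (use a_rng t at in auto)
  have cM: "config T xsM" unfolding xsM_def pm_def
    by (rule config_insort[OF assms(3) a_in]) (use a_rng t tP in auto)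
  have mP: "mult xsP a = mult xs a - 1" unfolding xsP_def by (rule mult_insort[OF a_in]) (use t in auto)
  have mM: "mult xsM a = mult xs a - 1" unfolding xsM_def pm_def by (rule mult_insort[OF a_in]) (use t tP in auto)
  have FP: "F1 s T xsP = En s P (uP t)" unfolding F1_En xsP_def uP_def ..
  have FM: "F1 s T xsM = En s P (uM t)" unfolding F1_En xsM_def uM_def ..
  have FU: "F1 s T xs = En s P u" unfolding F1_En ..
  have ineq: "En s P (uP t) + En s P (uM t) + Gi t \<le> En s P u + En s P u + Bi t"
    by (rule integral_ineq) (use t in auto)
  have G: "ennreal (c0 * t) \<le> Gi t" unfolding c0_def by (rule Gi_ge) (use t at in auto)
  have B: "Bi t \<le> phi t * ennreal (6 * t * (1 + real T))" by (rule Bi_le) (use t in auto)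
  have "phi t * ennreal (6 * t * (1 + real T)) < ennreal \<epsilon> * ennreal (6 * t * (1 + real T))"
    by (rule ennreal_mult_strict_right_mono[OF ph]) (use t in auto)
  also have "\<dots> = ennreal (c0 * t)"
  proof -
    have d: "0 < 1 + real T" by simp
    have e: "\<epsilon> * (6 * t * (1 + real T)) = c0 * t" unfolding \<epsilon>_def using d by (simp add: field_simps)
    have "ennreal \<epsilon> * ennreal (6 * t * (1 + real T)) = ennreal (\<epsilon> * (6 * t * (1 + real T)))"
      by (rule ennreal_mult[symmetric]) (use \<epsilon> t d in auto)
    then show ?thesis unfolding e .
  qed
  finally have BG: "Bi t < Gi t" using B G by (meson order.strict_trans1 order.strict_trans2)
  have fin: "En s P u < \<infinity>" by (rule En_fin) (use assms(1,2) T_pos len in auto)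
  have "En s P (uP t) < En s P u \<or> En s P (uM t) < En s P u"
  proof (rule ccontr)
    assume "\<not> ?thesis"
    then have h: "En s P u \<le> En s P (uP t)" "En s P u \<le> En s P (uM t)" by auto
    have "(En s P u + En s P u) + Gi t \<le> En s P (uP t) + En s P (uM t) + Gi t"
      using h by (intro add_mono) auto
    also have "\<dots> \<le> (En s P u + En s P u) + Bi t" using ineq by (simp add: add.assoc)
    finally have "Gi t \<le> Bi t" using fin by (auto simp: ennreal_add_left_cancel_le)
    then show False using BG by simp
  qed
  then show ?thesis
  proof
    assume "En s P (uP t) < En s P u"
    then show ?thesis using cP mP FP FU unfolding a_def by auto
  next
    assume "En s P (uM t) < En s P u"
    then show ?thesis using cM mM FM FU unfolding a_def by auto
  qed
qed

end
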